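(* For every ground state $s\in\mathcal{S}$ and every level $\mathfrak{h}\ge1$ of the hierarchy (i.e. every $\mathfrak{h}\in[1,\mathfrak{m}]$), there exists $\mathcal{P}\in\mathscr{P}^{\star,\mathfrak{h}}_{\rm rec}$ with $s\in\mathcal{P}$. In other words, the unique element of $\mathscr{P}^{\star,\mathfrak{h}}$ containing $s$ belongs to one of the closed communicating classes of $\mathfrak{X}^{\star,\mathfrak{h}}$, not to the transient set.
   Context: Setting. Let $\Omega$ be a finite set with a connected undirected graph structure; write $\eta\sim\xi$ if $\{\eta,\xi\}$ is an edge. Let $\mathbb{H}:\Omega\to\mathbb{R}$. Paths and heights. A path $\omega:\eta\to\xi$ is a sequence $(\omega_n)_{n=0}^N$ with $\omega_0=\eta$, $\omega_N=\xi$ and $\omega_n\sim\omega_{n+1}$ ($N=0$ allowed). Its height is $\Phi_\omega:=\max_n\mathbb{H}(\omega_n)$. Set $\Phi(\eta,\xi):=\min_{\omega:\eta\to\xi}\Phi_\omega$. For nonempty sets, $\Phi(\mathcal{A},\mathcal{B}):=\min_{\eta\in\mathcal{A},\xi\in\mathcal{B}}\Phi(\eta,\xi)$, and $\Phi(\mathcal{A},\eta):=\Phi(\mathcal{A},\{\eta\})$. Ground states. $\mathcal{S}:=\operatorname{argmin}_\Omega\mathbb{H}$, $\overline{\Phi}:=\max_{s,s'\in\mathcal{S}}\Phi(s,s')$, and $\overline{\Omega}:=\{\eta:\Phi(\mathcal{S},\eta)\le\overline{\Phi}\}$. Sets. For $\mathcal{A}\subseteq\Omega$: $\mathcal{F}(\mathcal{A}):=\operatorname{argmin}_{\mathcal{A}}\mathbb{H}$;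 $\partial\mathcal{A}:=\{\eta\notin\mathcal{A}:\eta\sim\xi\text{ for some }\xi\in\mathcal{A}\}$; $\partial^\star\mathcal{A}:=\mathcal{F}(\partial\mathcal{A})$. A set is connected if any two of its points are joined by a path inside it. Stable plateaux and cycles. A stable plateau is a nonempty connected set $\mathcal{P}$ with constant energy $\mathbb{H}(\mathcal{P})$ such that $\mathbb{H}>\mathbb{H}(\mathcal{P})$ on $\partial\mathcal{P}$. A cycle is a nonempty connected $\mathcal{C}$ with $\max_{\mathcal{C}}\mathbb{H}<\min_{\partial\mathcal{C}}\mathbb{H}$. Its depth is $\Gamma^{\mathcal{C}}:=\min_{\partial\mathcal{C}}\mathbb{H}-\min_{\mathcal{C}}\mathbb{H}$. General construction (C). Let $\mathscr{C}$ be a collection of pairwise disjoint cycles contained in $\overline{\Omega}$ with $|\mathscr{C}|\ge2$, and let $\Gamma^\star>0$. Put - $\mathscr{C}^\star:=\{\mathcal{C}\in\mathscr{C}:\Gamma^{\mathcal{C}}\ge\Gamma^\star\}$ and $\mathscr{C}^\sharp:=\{\mathcal{C}\in\mathscr{C}:\Gamma^{\mathcal{C}}<\Gamma^\star\}$; - $\mathscr{P}^{\mathscr{C}}:=\{\mathcal{F}(\mathcal{C}):\mathcal{C}\in\mathscr{C}\}$ and $\mathscr{P}^{\mathscr{C}^\star}:=\{\mathcal{F}(\mathcal{C}):\mathcal{C}\in\mathscr{C}^\star\}$; - $\Delta^{\mathscr{C}}:=\overline{\Omega}\setminus\bigcup_{\mathcal{C}\in\mathscr{C}}\mathcal{C}$.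 Let $\mathfrak{X}^{\mathscr{C}}$ be the continuous-time Markov chain on $\Omega^{\mathscr{C}}:=\Delta^{\mathscr{C}}\cup\mathscr{P}^{\mathscr{C}}$, in which each $\mathcal{F}(\mathcal{C})$ is treated as a single point. Its rates are: - $\mathfrak{R}^{\mathscr{C}}(\eta,\xi)=1$ for $\eta,\xi\in\Delta^{\mathscr{C}}$ with $\eta\sim\xi$ and $\mathbb{H}(\xi)\le\mathbb{H}(\eta)$; - $\mathfrak{R}^{\mathscr{C}}(\eta,\mathcal{F}(\mathcal{C}))=|\{\zeta\in\mathcal{C}:\eta\sim\zeta\}|$ for $\eta\in\Delta^{\mathscr{C}}\cap\partial\mathcal{C}$; - $\mathfrak{R}^{\mathscr{C}}(\mathcal{F}(\mathcal{C}),\eta)=|\mathcal{F}(\mathcal{C})|^{-1}|\{\zeta\in\mathcal{C}:\eta\sim\zeta\}|$ if $\Gamma^{\mathcal{C}}\le\Gamma^\star$ and $\eta\in\partial^\star\mathcal{C}$; - all other rates are $0$. The trace chain $\mathfrak{X}^{\mathscr{C}^\star}$ on $\mathscr{P}^{\mathscr{C}^\star}$ has rates, for distinct $\mathcal{C},\mathcal{C}'\in\mathscr{C}^\star$, $$\mathfrak{R}^{\mathscr{C}^\star}(\mathcal{F}(\mathcal{C}),\mathcal{F}(\mathcal{C}')):=\sum_{\eta\in\Delta^{\mathscr{C}}}\mathfrak{R}^{\mathscr{C}}(\mathcal{F}(\mathcal{C}),\eta)\,\mathbf{P}^{\mathscr{C}}_\eta[\mathcal{T}_{\mathcal{F}(\mathcal{C}')}=\mathcal{T}_{\mathscr{P}^{\mathscr{C}^\star}}].$$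 Here $\mathbf{P}^{\mathscr{C}}_\eta$ is the law of $\mathfrak{X}^{\mathscr{C}}$ started at $\eta$, and $\mathcal{T}_{\mathcal{A}}$ is the hitting time of $\mathcal{A}$. Hierarchy. Let $\mathscr{P}^1=\{\mathcal{P}_1^1,\dots,\mathcal{P}^1_{\nu_0}\}$ be the collection of all stable plateaux contained in $\overline{\Omega}$, and assume $\nu_0\ge2$. Suppose that at some level $\mathfrak{h}\ge1$ the sets $\mathcal{P}^{\mathfrak{h}}_1,\dots,\mathcal{P}^{\mathfrak{h}}_{\nu_{\mathfrak{h}-1}}$ are defined, with $\nu_{\mathfrak{h}-1}\ge2$. Then define: - $\mathbb{H}(\mathcal{P}^{\mathfrak{h}}_i):=\min_{\mathcal{P}^{\mathfrak{h}}_i}\mathbb{H}$; - $\mathscr{P}^{\star,\mathfrak{h}}:=\{\mathcal{P}^{\mathfrak{h}}_i:i\in[1,\nu_{\mathfrak{h}-1}]\}$; - $\breve{\mathcal{P}}^{\mathfrak{h}}_i:=\bigcup_{j\ne i}\mathcal{P}^{\mathfrak{h}}_j$; - $\Gamma^{\mathfrak{h}}_i:=\Phi(\mathcal{P}^{\mathfrak{h}}_i,\breve{\mathcal{P}}^{\mathfrak{h}}_i)-\mathbb{H}(\mathcal{P}^{\mathfrak{h}}_i)$ and $\Gamma^{\star,\mathfrak{h}}:=\min_i\Gamma_i^{\mathfrak{h}}$; - $\mathcal{V}^{\mathfrak{h}}_i:=\{\eta\in\Omega:\Phi(\mathcal{P}^{\mathfrak{h}}_i,\eta)-\mathbb{H}(\mathcal{P}^{\mathfrak{h}}_i)<\Gamma^{\mathfrak{h}}_i\}$.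 Set $\mathscr{C}^1:=\{\mathcal{V}^1_i:i\in[1,\nu_0]\}$. For $\mathfrak{h}\ge2$, set $$\mathscr{C}^{\mathfrak{h}}:=\{\mathcal{V}^{\mathfrak{h}}_i:i\in[1,\nu_{\mathfrak{h}-1}]\}\cup\{\mathcal{C}\in\mathscr{C}^{\star,\mathfrak{h}-1}_{\rm tr}\cup\mathscr{C}^{\sharp,\mathfrak{h}-1}:\mathcal{C}\cap\mathcal{V}^{\mathfrak{h}}_i=\emptyset\ \forall i\}.$$ Apply (C) to $(\mathscr{C}^{\mathfrak{h}},\Gamma^{\star,\mathfrak{h}})$. Write $\mathscr{C}^{\star,\mathfrak{h}}:=(\mathscr{C}^{\mathfrak{h}})^\star$ and $\mathscr{C}^{\sharp,\mathfrak{h}}:=(\mathscr{C}^{\mathfrak{h}})^\sharp$. Let $\mathfrak{X}^{\star,\mathfrak{h}}$ be the trace chain of (C) on $\mathscr{P}^{(\mathscr{C}^{\mathfrak{h}})^\star}$. Decompose $\mathscr{P}^{(\mathscr{C}^{\mathfrak{h}})^\star}$ into the closed communicating classes $\mathscr{P}^{\star,\mathfrak{h}}_1,\dots,\mathscr{P}^{\star,\mathfrak{h}}_{\nu_{\mathfrak{h}}}$ of $\mathfrak{X}^{\star,\mathfrak{h}}$ and the set $\mathscr{P}^{\star,\mathfrak{h}}_{\rm tr}$ of transient elements. Let $\mathscr{C}^{\star,\mathfrak{h}}_m:=\{\mathcal{C}\in\mathscr{C}^{\star,\mathfrak{h}}:\mathcal{F}(\mathcal{C})\in\mathscr{P}^{\star,\mathfrak{h}}_m\}$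 for $m\in\{1,\dots,\nu_{\mathfrak{h}},{\rm tr}\}$. If $\nu_{\mathfrak{h}}\ge2$, define $\mathcal{P}^{\mathfrak{h}+1}_i:=\bigcup_{\mathcal{P}\in\mathscr{P}^{\star,\mathfrak{h}}_i}\mathcal{P}$ for $i\in[1,\nu_{\mathfrak{h}}]$ and continue to level $\mathfrak{h}+1$. The terminal level $\mathfrak{m}$ is the first $\mathfrak{h}$ with $\nu_{\mathfrak{h}}=1$. Finally, $\mathscr{P}^{\star,\mathfrak{h}}_{\rm rec}:=\mathscr{P}^{\star,\mathfrak{h}}_1\cup\dots\cup\mathscr{P}^{\star,\mathfrak{h}}_{\nu_{\mathfrak{h}}}$. Here $[a,b]$ denotes the set of integers from $a$ to $b$. *)

theory Defs
  imports "HOL-Analysis.Analysis" "HOL-Library.Extended_Real"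
begin

(* Omega is the finite type 'a; E is the (symmetric) adjacency relation; H the energy. *)

definition is_path :: "('a \<Rightarrow> 'a \<Rightarrow> bool) \<Rightarrow> 'a list \<Rightarrow> bool" where
  "is_path E w \<longleftrightarrow> w \<noteq> [] \<and> (\<forall>i. Suc i < length w \<longrightarrow> E (w ! i) (w ! Suc i))"

definition path_height :: "('a \<Rightarrow> real) \<Rightarrow> 'a list \<Rightarrow> real" where
  "path_height H w = Max (H ` set w)"

definition Phi :: "('a \<Rightarrow> 'a \<Rightarrow> bool) \<Rightarrow> ('a \<Rightarrow> real) \<Rightarrow> 'a \<Rightarrow> 'a \<Rightarrow> real" where
  "Phi E H x y = Min {path_height H w | w. is_path E w \<and> hd w = x \<and> last w = y}"

definition PhiS :: "('a \<Rightarrow> 'a \<Rightarrow> bool) \<Rightarrow> ('a \<Rightarrow> real) \<Rightarrow> 'a set \<Rightarrow> 'a set \<Rightarrow> real" where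
  "PhiS E H A B = Min {Phi E H x y | x y. x \<in> A \<and> y \<in> B}"

definition ground :: "('a \<Rightarrow> real) \<Rightarrow> 'a set" where
  "ground H = {x. \<forall>y. H x \<le> H y}"

definition Phibar :: "('a \<Rightarrow> 'a \<Rightarrow> bool) \<Rightarrow> ('a \<Rightarrow> real) \<Rightarrow> real" where
  "Phibar E H = Max {Phi E H s s' | s s'. s \<in> ground H \<and> s' \<in> ground H}"

definition Omegabar :: "('a \<Rightarrow> 'a \<Rightarrow> bool) \<Rightarrow> ('a \<Rightarrow> real) \<Rightarrow> 'a set" where
  "Omegabar E H = {x. PhiS E H (ground H) {x} \<le> Phibar E H}"

definition Fmin :: "('a \<Rightarrow> real) \<Rightarrow> 'a set \<Rightarrow> 'a set" where
  "Fmin H A = {x \<in> A. \<forall>y\<in>A. H x \<le> H y}"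

definition bd :: "('a \<Rightarrow> 'a \<Rightarrow> bool) \<Rightarrow> 'a set \<Rightarrow> 'a set" where
  "bd E A = {x. x \<notin> A \<and> (\<exists>y\<in>A. E x y)}"

definition bdstar :: "('a \<Rightarrow> 'a \<Rightarrow> bool) \<Rightarrow> ('a \<Rightarrow> real) \<Rightarrow> 'a set \<Rightarrow> 'a set" where
  "bdstar E H A = Fmin H (bd E A)"

definition conn_set :: "('a \<Rightarrow> 'a \<Rightarrow> bool) \<Rightarrow> 'a set \<Rightarrow> bool" where
  "conn_set E A \<longleftrightarrow> (\<forall>x\<in>A. \<forall>y\<in>A. \<exists>w. is_path E w \<and> hd w = x \<and> last w = y \<and> set w \<subseteq> A)"

definition stable_plateau :: "('a \<Rightarrow> 'a \<Rightarrow> bool) \<Rightarrow> ('a \<Rightarrow> real) \<Rightarrow> 'a set \<Rightarrow> bool" where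
  "stable_plateau E H P \<longleftrightarrow> P \<noteq> {} \<and> conn_set E P \<and> (\<forall>x\<in>P. \<forall>y\<in>P. H x = H y)
     \<and> (\<forall>x\<in>P. \<forall>y\<in>bd E P. H x < H y)"

definition is_cycle :: "('a \<Rightarrow> 'a \<Rightarrow> bool) \<Rightarrow> ('a \<Rightarrow> real) \<Rightarrow> 'a set \<Rightarrow> bool" where
  "is_cycle E H C \<longleftrightarrow> C \<noteq> {} \<and> conn_set E C \<and> (\<forall>x\<in>C. \<forall>y\<in>bd E C. H x < H y)"

definition depth :: "('a \<Rightarrow> 'a \<Rightarrow> bool) \<Rightarrow> ('a \<Rightarrow> real) \<Rightarrow> 'a set \<Rightarrow> ereal" where
  "depth E H C = (if bd E C = {} then \<infinity> else ereal (Min (H ` bd E C) - Min (H ` C)))"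

text \<open>States of the collapsed chain are sets: a point eta of Delta is represented by {eta},
  a collapsed bottom F(C) by the set F(C) itself (these never coincide).\<close>

definition Delta :: "('a \<Rightarrow> 'a \<Rightarrow> bool) \<Rightarrow> ('a \<Rightarrow> real) \<Rightarrow> 'a set set \<Rightarrow> 'a set" where
  "Delta E H Cc = Omegabar E H - \<Union> Cc"

definition cstates :: "('a \<Rightarrow> 'a \<Rightarrow> bool) \<Rightarrow> ('a \<Rightarrow> real) \<Rightarrow> 'a set set \<Rightarrow> 'a set set" where
  "cstates E H Cc = (\<lambda>x. {x}) ` Delta E H Cc \<union> Fmin H ` Cc"

definition crate :: "('a \<Rightarrow> 'a \<Rightarrow> bool) \<Rightarrow> ('a \<Rightarrow> real) \<Rightarrow> 'a set set \<Rightarrow> real \<Rightarrow> 'a set \<Rightarrow> 'a set \<Rightarrow> real" where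
  "crate E H Cc G x y =
    (if x \<in> (\<lambda>z. {z}) ` Delta E H Cc \<and> y \<in> (\<lambda>z. {z}) ` Delta E H Cc then
       (let \<eta> = the_elem x; \<xi> = the_elem y in
        if \<eta> \<noteq> \<xi> \<and> E \<eta> \<xi> \<and> H \<xi> \<le> H \<eta> then 1 else 0)
     else if x \<in> (\<lambda>z. {z}) ` Delta E H Cc \<and> y \<in> Fmin H ` Cc then
       (let \<eta> = the_elem x; C = (SOME C. C \<in> Cc \<and> y = Fmin H C) in
        if \<eta> \<in> bd E C then real (card {\<zeta> \<in> C. E \<eta> \<zeta>}) else 0)
     else if x \<in> Fmin H ` Cc \<and> y \<in> (\<lambda>z. {z}) ` Delta E H Cc then
       (let \<eta> = the_elem y; C = (SOME C. C \<in> Cc \<and> x = Fmin H C) in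
        if depth E H C \<le> ereal G \<and> \<eta> \<in> bdstar E H C
        then real (card {\<zeta> \<in> C. E \<eta> \<zeta>}) / real (card x) else 0)
     else 0)"

text \<open>Probability that the (jump chain of the) collapsed chain started at x hits the set of
  states A for the first time at the state t, within n jumps.\<close>
fun hitn :: "('a \<Rightarrow> 'a \<Rightarrow> bool) \<Rightarrow> ('a \<Rightarrow> real) \<Rightarrow> 'a set set \<Rightarrow> real \<Rightarrow> 'a set set \<Rightarrow> 'a set
    \<Rightarrow> nat \<Rightarrow> 'a set \<Rightarrow> real" where
  "hitn E H Cc G A t 0 x = (if x = t then 1 else 0)"
| "hitn E H Cc G A t (Suc n) x =
     (if x = t then 1 else if x \<in> A then 0 else
      (let q = (\<Sum>y\<in>cstates E H Cc. crate E H Cc G x y) in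
       if q = 0 then 0 else (\<Sum>y\<in>cstates E H Cc. crate E H Cc G x y / q * hitn E H Cc G A t n y)))"

definition hitprob :: "('a \<Rightarrow> 'a \<Rightarrow> bool) \<Rightarrow> ('a \<Rightarrow> real) \<Rightarrow> 'a set set \<Rightarrow> real \<Rightarrow> 'a set set \<Rightarrow> 'a set
    \<Rightarrow> 'a set \<Rightarrow> real" where
  "hitprob E H Cc G A t x = (SUP n. hitn E H Cc G A t n x)"

definition Cstar :: "('a \<Rightarrow> 'a \<Rightarrow> bool) \<Rightarrow> ('a \<Rightarrow> real) \<Rightarrow> 'a set set \<Rightarrow> real \<Rightarrow> 'a set set" where
  "Cstar E H Cc G = {C \<in> Cc. depth E H C \<ge> ereal G}"

definition Csharp :: "('a \<Rightarrow> 'a \<Rightarrow> bool) \<Rightarrow> ('a \<Rightarrow> real) \<Rightarrow> 'a set set \<Rightarrow> real \<Rightarrow> 'a set set" where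
  "Csharp E H Cc G = {C \<in> Cc. depth E H C < ereal G}"

definition Pstar :: "('a \<Rightarrow> 'a \<Rightarrow> bool) \<Rightarrow> ('a \<Rightarrow> real) \<Rightarrow> 'a set set \<Rightarrow> real \<Rightarrow> 'a set set" where
  "Pstar E H Cc G = Fmin H ` Cstar E H Cc G"

text \<open>Rates of the trace chain on P^{C*}.\<close>
definition trate :: "('a \<Rightarrow> 'a \<Rightarrow> bool) \<Rightarrow> ('a \<Rightarrow> real) \<Rightarrow> 'a set set \<Rightarrow> real \<Rightarrow> 'a set \<Rightarrow> 'a set \<Rightarrow> real" where
  "trate E H Cc G P P' =
     (\<Sum>\<eta>\<in>Delta E H Cc. crate E H Cc G P {\<eta>} * hitprob E H Cc G (Pstar E H Cc G) P' {\<eta>})"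

definition treach :: "('a \<Rightarrow> 'a \<Rightarrow> bool) \<Rightarrow> ('a \<Rightarrow> real) \<Rightarrow> 'a set set \<Rightarrow> real \<Rightarrow> ('a set \<times> 'a set) set" where
  "treach E H Cc G = {(P, P'). P \<in> Pstar E H Cc G \<and> P' \<in> Pstar E H Cc G \<and> P \<noteq> P'
                                \<and> trate E H Cc G P P' > 0}"

text \<open>Recurrent states of the trace chain = union of its closed communicating classes.\<close>
definition Prec :: "('a \<Rightarrow> 'a \<Rightarrow> bool) \<Rightarrow> ('a \<Rightarrow> real) \<Rightarrow> 'a set set \<Rightarrow> real \<Rightarrow> 'a set set" where
  "Prec E H Cc G = {P \<in> Pstar E H Cc G. \<forall>P'. (P, P') \<in> (treach E H Cc G)\<^sup>* \<longrightarrow> (P', P) \<in> (treach E H Cc G)\<^sup>*}"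

definition Ptr :: "('a \<Rightarrow> 'a \<Rightarrow> bool) \<Rightarrow> ('a \<Rightarrow> real) \<Rightarrow> 'a set set \<Rightarrow> real \<Rightarrow> 'a set set" where
  "Ptr E H Cc G = Pstar E H Cc G - Prec E H Cc G"

definition closed_classes :: "('a \<Rightarrow> 'a \<Rightarrow> bool) \<Rightarrow> ('a \<Rightarrow> real) \<Rightarrow> 'a set set \<Rightarrow> real \<Rightarrow> 'a set set set" where
  "closed_classes E H Cc G =
     {{P'. (P, P') \<in> (treach E H Cc G)\<^sup>* \<and> (P', P) \<in> (treach E H Cc G)\<^sup>*} | P. P \<in> Prec E H Cc G}"

definition Ctr :: "('a \<Rightarrow> 'a \<Rightarrow> bool) \<Rightarrow> ('a \<Rightarrow> real) \<Rightarrow> 'a set set \<Rightarrow> real \<Rightarrow> 'a set set" where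
  "Ctr E H Cc G = {C \<in> Cstar E H Cc G. Fmin H C \<in> Ptr E H Cc G}"

definition Hm :: "('a \<Rightarrow> real) \<Rightarrow> 'a set \<Rightarrow> real" where
  "Hm H P = Min (H ` P)"

definition Gam :: "('a \<Rightarrow> 'a \<Rightarrow> bool) \<Rightarrow> ('a \<Rightarrow> real) \<Rightarrow> 'a set set \<Rightarrow> 'a set \<Rightarrow> real" where
  "Gam E H Ps P = PhiS E H P (\<Union> (Ps - {P})) - Hm H P"

definition Gstar :: "('a \<Rightarrow> 'a \<Rightarrow> bool) \<Rightarrow> ('a \<Rightarrow> real) \<Rightarrow> 'a set set \<Rightarrow> real" where
  "Gstar E H Ps = Min (Gam E H Ps ` Ps)"

definition Vset :: "('a \<Rightarrow> 'a \<Rightarrow> bool) \<Rightarrow> ('a \<Rightarrow> real) \<Rightarrow> 'a set set \<Rightarrow> 'a set \<Rightarrow> 'a set" where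
  "Vset E H Ps P = {x. PhiS E H P {x} - Hm H P < Gam E H Ps P}"

definition plateaux1 :: "('a \<Rightarrow> 'a \<Rightarrow> bool) \<Rightarrow> ('a \<Rightarrow> real) \<Rightarrow> 'a set set" where
  "plateaux1 E H = {P. stable_plateau E H P \<and> P \<subseteq> Omegabar E H}"

text \<open>Data of level h: the collection {P^h_i} and the collection of cycles C^h.\<close>
fun lev :: "('a \<Rightarrow> 'a \<Rightarrow> bool) \<Rightarrow> ('a \<Rightarrow> real) \<Rightarrow> nat \<Rightarrow> 'a set set \<times> 'a set set" where
  "lev E H 0 = ({}, {})"
| "lev E H (Suc 0) = (plateaux1 E H, Vset E H (plateaux1 E H) ` plateaux1 E H)"
| "lev E H (Suc (Suc n)) =
     (let (Ps, Cc) = lev E H (Suc n); G = Gstar E H Ps;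
          Ps' = Union ` closed_classes E H Cc G
      in (Ps', Vset E H Ps' ` Ps' \<union>
               {C \<in> Ctr E H Cc G \<union> Csharp E H Cc G. \<forall>P\<in>Ps'. C \<inter> Vset E H Ps' P = {}}))"

definition levP :: "('a \<Rightarrow> 'a \<Rightarrow> bool) \<Rightarrow> ('a \<Rightarrow> real) \<Rightarrow> nat \<Rightarrow> 'a set set" where
  "levP E H h = fst (lev E H h)"

definition levC :: "('a \<Rightarrow> 'a \<Rightarrow> bool) \<Rightarrow> ('a \<Rightarrow> real) \<Rightarrow> nat \<Rightarrow> 'a set set" where
  "levC E H h = snd (lev E H h)"

definition nu :: "('a \<Rightarrow> 'a \<Rightarrow> bool) \<Rightarrow> ('a \<Rightarrow> real) \<Rightarrow> nat \<Rightarrow> nat" where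
  "nu E H h = card (closed_classes E H (levC E H h) (Gstar E H (levP E H h)))"

definition Prec_lev :: "('a \<Rightarrow> 'a \<Rightarrow> bool) \<Rightarrow> ('a \<Rightarrow> real) \<Rightarrow> nat \<Rightarrow> 'a set set" where
  "Prec_lev E H h = Prec E H (levC E H h) (Gstar E H (levP E H h))"

end

theory Submission
  imports Defs
begin

section \<open>Paths\<close>

lemma is_path_single[simp]: "is_path E [x]"
  by (simp add: is_path_def)

lemma is_path_snoc:
  assumes "is_path E w" "E (last w) z"
  shows "is_path E (w @ [z])"
  using assms unfolding is_path_def
  apply (auto simp: nth_append last_conv_nth less_Suc_eq)
  subgoal for i by (subgoal_tac "i = length w - Suc 0") simp_all
  done

lemma is_path_join:
  assumes "is_path E w1" "is_path E w2" "last w1 = hd w2"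
  shows "is_path E (w1 @ tl w2)"
  using assms(2,3,1)
proof (induction w2 arbitrary: w1 rule: rev_induct)
  case Nil then show ?case by (simp add: is_path_def)
next
  case (snoc z w2)
  show ?case
  proof (cases "w2 = []")
    case True then show ?thesis using snoc.prems(3) by simp
  next
    case False
    have p2: "is_path E w2" using snoc.prems False unfolding is_path_def
      apply (auto simp: nth_append)
      subgoal for i by (erule allE[of _ i]) auto
      done
    have "hd (w2 @ [z]) = hd w2" using False by simp
    then have ih: "is_path E (w1 @ tl w2)" using snoc.IH[OF p2] snoc.prems by simp
    have "E (last w2) z" using snoc.prems(1) False unfolding is_path_def
      apply (auto simp: nth_append last_conv_nth)
      apply (erule allE[of _ "length w2 - 1"])
      by auto
    moreover have "last (w1 @ tl w2) = last w2" using False snoc.prems(2)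
      by (cases w2) auto
    ultimately have "is_path E ((w1 @ tl w2) @ [z])" using ih is_path_snoc by metis
    moreover have "tl (w2 @ [z]) = tl w2 @ [z]" using False by (cases w2) auto
    ultimately show ?thesis by simp
  qed
qed

lemma is_path_rev:
  assumes sym: "\<forall>x y. E x y \<longrightarrow> E y x" and p: "is_path E w"
  shows "is_path E (rev w)"
  unfolding is_path_def
proof (intro conjI allI impI)
  show "rev w \<noteq> []" using p unfolding is_path_def by simp
  fix i assume i: "Suc i < length (rev w)"
  define j where "j = length w - Suc (Suc i)"
  have j: "Suc j < length w" "Suc j = length w - Suc i" using i unfolding j_def by auto
  have "E (w ! j) (w ! Suc j)" using p j(1) unfolding is_path_def by blast
  then have "E (w ! Suc j) (w ! j)" using sym by blast
  moreover have "rev w ! i = w ! Suc j" using i j by (simp add: rev_nth)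
  moreover have "rev w ! Suc i = w ! j" using i j unfolding j_def by (simp add: rev_nth)
  ultimately show "E (rev w ! i) (rev w ! Suc i)" by simp
qed

lemma path_cross:
  assumes "is_path E w" "P (hd w)" "\<not> P (last w)"
  shows "\<exists>i. Suc i < length w \<and> P (w ! i) \<and> \<not> P (w ! Suc i)"
proof -
  have ne: "w \<noteq> []" using assms unfolding is_path_def by auto
  define k where "k = (LEAST i. i < length w \<and> \<not> P (w ! i))"
  have ex: "length w - 1 < length w \<and> \<not> P (w ! (length w - 1))"
    using ne assms(3) by (simp add: last_conv_nth)
  have k: "k < length w \<and> \<not> P (w ! k)" unfolding k_def by (rule LeastI, rule ex)
  have k0: "k \<noteq> 0"
  proof
    assume "k = 0" then show False using k assms(2) ne by (simp add: hd_conv_nth)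
  qed
  have "k - 1 < k" using k0 by simp
  then have "\<not> (k - 1 < length w \<and> \<not> P (w ! (k - 1)))"
    unfolding k_def by (rule not_less_Least)
  then have "P (w ! (k - 1))" using k by auto
  then show ?thesis using k k0 by (intro exI[of _ "k - 1"]) auto
qed

section \<open>Heights\<close>

lemma path_height_ge:
  assumes "z \<in> set w" shows "H z \<le> path_height H w"
  using assms unfolding path_height_def by (intro Max_ge) auto

lemma path_height_le:
  assumes "w \<noteq> []" "\<forall>z\<in>set w. H z \<le> c" shows "path_height H w \<le> c"
  using assms unfolding path_height_def by (subst Max_le_iff) auto

lemma path_height_in:
  assumes "w \<noteq> []" shows "path_height H w \<in> H ` set w"
  using assms unfolding path_height_def by (intro Max_in) auto

locale gr =
  fixes E :: "'a::finite \<Rightarrow> 'a \<Rightarrow> bool" and H :: "'a \<Rightarrow> real"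
  assumes sym: "\<forall>x y. E x y \<longrightarrow> E y x"
    and connected: "\<forall>x y. (x, y) \<in> {(a, b). E a b}\<^sup>*"
begin

lemma path_exists: "\<exists>w. is_path E w \<and> hd w = x \<and> last w = y"
proof -
  have "(x, y) \<in> {(a, b). E a b}\<^sup>*" using connected by blast
  then show ?thesis
  proof (induction rule: rtrancl_induct)
    case base
    then show ?case by (intro exI[of _ "[x]"]) simp
  next
    case (step y z)
    then obtain w where w: "is_path E w" "hd w = x" "last w = y" by blast
    have ne: "w \<noteq> []" using w unfolding is_path_def by auto
    show ?case using w ne step is_path_snoc[of E w z]
      by (intro exI[of _ "w @ [z]"]) auto
  qed
qed

definition "PH x y = {path_height H w | w. is_path E w \<and> hd w = x \<and> last w = y}"

lemma PH_fin: "finite (PH x y)"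
proof -
  have "PH x y \<subseteq> range H"
  proof
    fix h assume "h \<in> PH x y"
    then obtain w where w: "is_path E w" "h = path_height H w" unfolding PH_def by blast
    then have "w \<noteq> []" unfolding is_path_def by simp
    then have "h \<in> H ` set w" using w path_height_in by metis
    then show "h \<in> range H" by blast
  qed
  moreover have "finite (range H)" by simp
  ultimately show ?thesis by (rule finite_subset)
qed

lemma PH_ne: "PH x y \<noteq> {}" using path_exists[of x y] unfolding PH_def by blast

lemma Phi_PH: "Phi E H x y = Min (PH x y)" unfolding Phi_def PH_def by simp

lemma Phi_le:
  assumes "is_path E w" "hd w = x" "last w = y"
  shows "Phi E H x y \<le> path_height H w"
proof -
  have "path_height H w \<in> PH x y" unfolding PH_def using assms by blast
  then show ?thesis unfolding Phi_PH using PH_fin by (rule Min_le[rotated])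
qed

lemma Phi_attain:
  "\<exists>w. is_path E w \<and> hd w = x \<and> last w = y \<and> Phi E H x y = path_height H w"
proof -
  have "Phi E H x y \<in> PH x y" unfolding Phi_PH
    using PH_fin PH_ne by (rule Min_in)
  then show ?thesis unfolding PH_def by blast
qed

lemma Phi_ge_hd: "H x \<le> Phi E H x y"
proof -
  obtain w where w: "is_path E w" "hd w = x" "last w = y" "Phi E H x y = path_height H w"
    using Phi_attain[of x y] by blast
  then have "x \<in> set w" unfolding is_path_def by auto
  then show ?thesis using w path_height_ge by metis
qed

lemma Phi_ge_last: "H y \<le> Phi E H x y"
proof -
  obtain w where w: "is_path E w" "hd w = x" "last w = y" "Phi E H x y = path_height H w"
    using Phi_attain[of x y] by blast
  then have "y \<in> set w" unfolding is_path_def by auto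
  then show ?thesis using w path_height_ge by metis
qed

lemma Phi_refl: "Phi E H x x = H x"
proof -
  have "Phi E H x x \<le> path_height H [x]" by (rule Phi_le) auto
  also have "\<dots> = H x" unfolding path_height_def by simp
  finally show ?thesis using Phi_ge_hd[of x x] by simp
qed

lemma Phi_sym: "Phi E H x y = Phi E H y x"
proof -
  have *: "Phi E H a b \<le> Phi E H b a" for a b
  proof -
    obtain w where w: "is_path E w" "hd w = b" "last w = a" "Phi E H b a = path_height H w"
      using Phi_attain[of b a] by blast
    have ne: "w \<noteq> []" using w unfolding is_path_def by auto
    have "is_path E (rev w)" using is_path_rev[OF sym w(1)] .
    moreover have "hd (rev w) = a" "last (rev w) = b" using w ne
      by (auto simp: hd_rev last_rev)
    ultimately have "Phi E H a b \<le> path_height H (rev w)" by (rule Phi_le)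
    also have "\<dots> = path_height H w" unfolding path_height_def by simp
    finally show ?thesis using w by simp
  qed
  show ?thesis using *[of x y] *[of y x] by simp
qed

lemma Phi_trans: "Phi E H x z \<le> max (Phi E H x y) (Phi E H y z)"
proof -
  obtain w1 where w1: "is_path E w1" "hd w1 = x" "last w1 = y" "Phi E H x y = path_height H w1"
    using Phi_attain[of x y] by blast
  obtain w2 where w2: "is_path E w2" "hd w2 = y" "last w2 = z" "Phi E H y z = path_height H w2"
    using Phi_attain[of y z] by blast
  have ne1: "w1 \<noteq> []" and ne2: "w2 \<noteq> []" using w1 w2 unfolding is_path_def by auto
  have p: "is_path E (w1 @ tl w2)" using is_path_join[OF w1(1) w2(1)] w1(3) w2(2) by simp
  have hd: "hd (w1 @ tl w2) = x" using ne1 w1 by simp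
  have lst: "last (w1 @ tl w2) = z"
  proof (cases "tl w2 = []")
    case True
    then have "z = y" using w2 ne2 by (cases w2) auto
    then show ?thesis using True w1 by simp
  next
    case False
    then show ?thesis using w2 ne2 by (cases w2) auto
  qed
  have "Phi E H x z \<le> path_height H (w1 @ tl w2)" using p hd lst by (rule Phi_le)
  also have "\<dots> \<le> max (path_height H w1) (path_height H w2)"
  proof (rule path_height_le)
    show "w1 @ tl w2 \<noteq> []" using ne1 by simp
    show "\<forall>u\<in>set (w1 @ tl w2). H u \<le> max (path_height H w1) (path_height H w2)"
    proof
      fix u assume "u \<in> set (w1 @ tl w2)"
      moreover have "set (tl w2) \<subseteq> set w2" by (cases w2) auto
      ultimately have "u \<in> set w1 \<or> u \<in> set w2" by auto
      then show "H u \<le> max (path_height H w1) (path_height H w2)"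
        using path_height_ge[of u w1 H] path_height_ge[of u w2 H] by auto
    qed
  qed
  finally show ?thesis using w1 w2 by simp
qed

lemma Phi_edge: "E x y \<Longrightarrow> Phi E H x y \<le> max (H x) (H y)"
proof -
  assume e: "E x y"
  have "is_path E [x, y]" using e unfolding is_path_def by (auto simp: less_Suc_eq)
  then have "Phi E H x y \<le> path_height H [x, y]" by (rule Phi_le) auto
  then show ?thesis unfolding path_height_def by simp
qed

lemma Phi_cross:
  assumes "x \<in> C" "y \<notin> C"
  shows "\<exists>b\<in>bd E C. H b \<le> Phi E H x y"
proof -
  obtain w where w: "is_path E w" "hd w = x" "last w = y" "Phi E H x y = path_height H w"
    using Phi_attain[of x y] by blast
  obtain i where i: "Suc i < length w" "w ! i \<in> C" "w ! Suc i \<notin> C"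
    using path_cross[of E w "\<lambda>u. u \<in> C"] w assms by auto
  have "E (w ! i) (w ! Suc i)" using w(1) i unfolding is_path_def by auto
  then have "w ! Suc i \<in> bd E C" using i sym unfolding bd_def by blast
  moreover have "H (w ! Suc i) \<le> Phi E H x y"
    using w(4) path_height_ge[of "w ! Suc i" w H] i(1) by simp
  ultimately show ?thesis by blast
qed

lemma PhiS_fin: "finite {Phi E H x y | x y. x \<in> A \<and> y \<in> B}"
proof -
  have "{Phi E H x y | x y. x \<in> A \<and> y \<in> B} = (\<lambda>(x,y). Phi E H x y) ` (A \<times> B)" by auto
  then show ?thesis by simp
qed

lemma PhiS_le: "a \<in> A \<Longrightarrow> b \<in> B \<Longrightarrow> PhiS E H A B \<le> Phi E H a b"
  unfolding PhiS_def using PhiS_fin by (intro Min_le) auto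

lemma PhiS_attain:
  assumes "A \<noteq> {}" "B \<noteq> {}"
  shows "\<exists>a\<in>A. \<exists>b\<in>B. PhiS E H A B = Phi E H a b"
proof -
  have "PhiS E H A B \<in> {Phi E H x y | x y. x \<in> A \<and> y \<in> B}"
    unfolding PhiS_def using PhiS_fin assms by (intro Min_in) auto
  then show ?thesis by blast
qed

lemma PhiS_ge:
  assumes "A \<noteq> {}" "B \<noteq> {}" "\<And>a b. a \<in> A \<Longrightarrow> b \<in> B \<Longrightarrow> c \<le> Phi E H a b"
  shows "c \<le> PhiS E H A B"
proof -
  obtain a b where "a \<in> A" "b \<in> B" "PhiS E H A B = Phi E H a b"
    using PhiS_attain[OF assms(1,2)] by blast
  then show ?thesis using assms(3) by simp
qed

end


section \<open>Chain\<close>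

lemma Fmin_sub: "Fmin H C \<subseteq> C" unfolding Fmin_def by auto

lemma Fmin_ne:
  fixes H :: "'a::finite \<Rightarrow> real"
  assumes "C \<noteq> {}" shows "Fmin H C \<noteq> {}"
proof -
  have "Min (H ` C) \<in> H ` C" using assms by (intro Min_in) auto
  then obtain x where x: "x \<in> C" "H x = Min (H ` C)" by auto
  then have "x \<in> Fmin H C" unfolding Fmin_def by auto
  then show ?thesis by auto
qed

lemma ground_Fmin: "z \<in> ground H \<Longrightarrow> z \<in> C \<Longrightarrow> z \<in> Fmin H C"
  unfolding ground_def Fmin_def by auto

locale chainctx = gr E H for E :: "'a::finite \<Rightarrow> 'a \<Rightarrow> bool" and H +
  fixes Cc :: "'a set set" and G :: real
  assumes Cc_ne: "\<forall>C\<in>Cc. C \<noteq> {}"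
    and Cc_disj: "\<forall>C\<in>Cc. \<forall>C'\<in>Cc. C \<noteq> C' \<longrightarrow> C \<inter> C' = {}"
begin

abbreviation "D \<equiv> Delta E H Cc"
abbreviation "cs \<equiv> cstates E H Cc"
abbreviation "A \<equiv> Pstar E H Cc G"
abbreviation "cr \<equiv> crate E H Cc G"

lemma Fmin_inj:
  assumes "C \<in> Cc" "C' \<in> Cc" "Fmin H C = Fmin H C'" shows "C = C'"
proof (rule ccontr)
  assume "C \<noteq> C'"
  then have "C \<inter> C' = {}" using Cc_disj assms by blast
  moreover have "Fmin H C \<subseteq> C \<inter> C'" using Fmin_sub[of H C] Fmin_sub[of H C'] assms(3) by auto
  moreover have "Fmin H C \<noteq> {}" using Fmin_ne[of C H] Cc_ne assms(1) by blast
  ultimately show False by blast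
qed

lemma ch: "C' \<in> Cc \<Longrightarrow> (SOME C. C \<in> Cc \<and> Fmin H C' = Fmin H C) = C'"
  by (rule some_equality) (auto dest: Fmin_inj)

lemma sing_not_F: "\<eta> \<in> D \<Longrightarrow> C \<in> Cc \<Longrightarrow> {\<eta>} \<noteq> Fmin H C"
  using Fmin_sub[of H C] unfolding Delta_def by blast

lemma crate_dd:
  "\<eta> \<in> D \<Longrightarrow> \<xi> \<in> D \<Longrightarrow> cr {\<eta>} {\<xi>} = (if \<eta> \<noteq> \<xi> \<and> E \<eta> \<xi> \<and> H \<xi> \<le> H \<eta> then 1 else 0)"
  unfolding crate_def by (simp add: Let_def)

lemma crate_dc:
  assumes "\<eta> \<in> D" "C \<in> Cc"
  shows "cr {\<eta>} (Fmin H C) = (if \<eta> \<in> bd E C then real (card {\<zeta> \<in> C. E \<eta> \<zeta>}) else 0)"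
proof -
  have "Fmin H C \<notin> (\<lambda>z. {z}) ` D" using sing_not_F assms by blast
  then show ?thesis unfolding crate_def using assms ch[OF assms(2)] by (simp add: Let_def)
qed

lemma crate_cd:
  assumes "\<eta> \<in> D" "C \<in> Cc"
  shows "cr (Fmin H C) {\<eta>} = (if depth E H C \<le> ereal G \<and> \<eta> \<in> bdstar E H C
        then real (card {\<zeta> \<in> C. E \<eta> \<zeta>}) / real (card (Fmin H C)) else 0)"
proof -
  have "Fmin H C \<notin> (\<lambda>z. {z}) ` D" using sing_not_F assms by blast
  then show ?thesis unfolding crate_def using assms ch[OF assms(2)] by (simp add: Let_def)
qed

lemma crate_cc:
  assumes "C \<in> Cc" "C' \<in> Cc"
  shows "cr (Fmin H C) (Fmin H C') = 0"
proof -
  have "Fmin H C \<notin> (\<lambda>z. {z}) ` D" "Fmin H C' \<notin> (\<lambda>z. {z}) ` D" using sing_not_F assms by blast+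
  then show ?thesis unfolding crate_def by simp
qed

lemma crate_nonneg: "0 \<le> cr x y"
  unfolding crate_def by (simp add: Let_def)

lemma card_nb_pos:
  assumes "\<eta> \<in> bd E C" shows "0 < card {\<zeta> \<in> C. E \<eta> \<zeta>}"
proof -
  have "{\<zeta> \<in> C. E \<eta> \<zeta>} \<noteq> {}" using assms unfolding bd_def by auto
  then show ?thesis by (simp add: card_gt_0_iff)
qed

lemma crate_dc_pos:
  assumes "\<eta> \<in> D" "C \<in> Cc"
  shows "0 < cr {\<eta>} (Fmin H C) \<longleftrightarrow> \<eta> \<in> bd E C"
  using crate_dc[OF assms] card_nb_pos by auto

lemma crate_cd_pos:
  assumes "\<eta> \<in> D" "C \<in> Cc"
  shows "0 < cr (Fmin H C) {\<eta>} \<longleftrightarrow> depth E H C \<le> ereal G \<and> \<eta> \<in> bdstar E H C"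
proof -
  have "0 < card (Fmin H C)" using Fmin_ne[of C H] Cc_ne assms(2) by (simp add: card_gt_0_iff)
  moreover have "\<eta> \<in> bdstar E H C \<Longrightarrow> 0 < card {\<zeta> \<in> C. E \<eta> \<zeta>}"
    using card_nb_pos unfolding bdstar_def Fmin_def by auto
  ultimately show ?thesis using crate_cd[OF assms] by auto
qed

lemma cs_cases:
  assumes "y \<in> cs"
  obtains \<xi> where "\<xi> \<in> D" "y = {\<xi>}" | C where "C \<in> Cc" "y = Fmin H C"
  using assms unfolding cstates_def by auto

lemma cs_sing: "\<eta> \<in> D \<Longrightarrow> {\<eta>} \<in> cs" unfolding cstates_def by auto
lemma cs_F: "C \<in> Cc \<Longrightarrow> Fmin H C \<in> cs" unfolding cstates_def by auto

lemma A_sub: "A \<subseteq> Fmin H ` Cc" unfolding Pstar_def Cstar_def by auto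

lemma sing_notA: "\<eta> \<in> D \<Longrightarrow> {\<eta>} \<notin> A" using A_sub sing_not_F by blast

lemma fin_cs: "finite cs" by simp

lemma hitn_bounds: "0 \<le> hitn E H Cc G B t n x \<and> hitn E H Cc G B t n x \<le> 1"
proof (induction n arbitrary: x)
  case 0 then show ?case by simp
next
  case (Suc n)
  define q where "q = (\<Sum>y\<in>cs. cr x y)"
  have q0: "0 \<le> q" unfolding q_def by (intro sum_nonneg) (simp add: crate_nonneg)
  show ?case
  proof (cases "x = t \<or> x \<in> B \<or> q = 0")
    case True then show ?thesis by (auto simp: q_def Let_def)
  next
    case False
    then have qp: "0 < q" using q0 by auto
    have eq: "hitn E H Cc G B t (Suc n) x = (\<Sum>y\<in>cs. cr x y / q * hitn E H Cc G B t n y)"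
      using False by (simp add: q_def Let_def)
    have "(\<Sum>y\<in>cs. cr x y / q * hitn E H Cc G B t n y) \<le> (\<Sum>y\<in>cs. cr x y / q)"
    proof (rule sum_mono)
      fix y
      have "0 \<le> cr x y / q" using qp crate_nonneg[of x y] by simp
      then show "cr x y / q * hitn E H Cc G B t n y \<le> cr x y / q"
        by (rule mult_left_le[rotated]) (use Suc.IH[of y] in auto)
    qed
    also have "\<dots> = q / q" unfolding q_def by (rule sum_divide_distrib[symmetric])
    also have "\<dots> = 1" using qp by simp
    finally have "hitn E H Cc G B t (Suc n) x \<le> 1" using eq by simp
    moreover have "0 \<le> hitn E H Cc G B t (Suc n) x" unfolding eq using Suc.IH qp crate_nonneg
      by (intro sum_nonneg) (simp add: divide_nonneg_pos)
    ultimately show ?thesis by simp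
  qed
qed

lemma hitn_t: "hitn E H Cc G B t n t = 1" by (cases n) auto

lemma hitn_B: "x \<in> B \<Longrightarrow> x \<noteq> t \<Longrightarrow> hitn E H Cc G B t n x = 0" by (cases n) auto

lemma hitn_Suc_pos:
  assumes "x \<noteq> t" "x \<notin> B" "0 < hitn E H Cc G B t (Suc n) x"
  shows "\<exists>y\<in>cs. 0 < cr x y \<and> 0 < hitn E H Cc G B t n y"
proof (rule ccontr)
  assume nx: "\<not> ?thesis"
  define q where "q = (\<Sum>y\<in>cs. cr x y)"
  have q0: "0 \<le> q" unfolding q_def by (intro sum_nonneg) (simp add: crate_nonneg)
  have "hitn E H Cc G B t (Suc n) x \<le> 0"
  proof (cases "q = 0")
    case True then show ?thesis using assms by (simp add: q_def Let_def)
  next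
    case False
    then have eq: "hitn E H Cc G B t (Suc n) x = (\<Sum>y\<in>cs. cr x y / q * hitn E H Cc G B t n y)"
      using assms by (simp add: q_def Let_def)
    have "\<forall>y\<in>cs. cr x y / q * hitn E H Cc G B t n y \<le> 0"
    proof
      fix y assume "y \<in> cs"
      then have "cr x y = 0 \<or> hitn E H Cc G B t n y = 0" using nx crate_nonneg[of x y]
        hitn_bounds[of B t n y] by force
      then show "cr x y / q * hitn E H Cc G B t n y \<le> 0" by auto
    qed
    then show ?thesis unfolding eq by (intro sum_nonpos) auto
  qed
  then show False using assms by simp
qed

lemma hitn_step:
  assumes "x \<noteq> t" "x \<notin> B" "y \<in> cs" "0 < cr x y" "0 < hitn E H Cc G B t n y"
  shows "0 < hitn E H Cc G B t (Suc n) x"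
proof -
  define q where "q = (\<Sum>y\<in>cs. cr x y)"
  have "cr x y \<le> q" unfolding q_def using assms(3) crate_nonneg
    by (intro member_le_sum) auto
  then have qp: "0 < q" using assms by simp
  then have eq: "hitn E H Cc G B t (Suc n) x = (\<Sum>y\<in>cs. cr x y / q * hitn E H Cc G B t n y)"
    using assms by (simp add: q_def Let_def)
  have "0 < cr x y / q * hitn E H Cc G B t n y" using assms qp by simp
  also have "\<dots> \<le> (\<Sum>y\<in>cs. cr x y / q * hitn E H Cc G B t n y)"
    using assms(3) qp crate_nonneg hitn_bounds
    by (intro member_le_sum) (auto intro!: mult_nonneg_nonneg divide_nonneg_pos)
  finally show ?thesis using eq by simp
qed

lemma hitprob_ge: "hitn E H Cc G B t n x \<le> hitprob E H Cc G B t x"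
  unfolding hitprob_def
  by (rule cSUP_upper) (auto intro: bdd_aboveI[where M=1] simp: hitn_bounds)

lemma hitprob_nonneg: "0 \<le> hitprob E H Cc G B t x"
  using hitprob_ge[of B t 0 x] hitn_bounds[of B t 0 x] by linarith

lemma hitprob_pos: "0 < hitprob E H Cc G B t x \<Longrightarrow> \<exists>n. 0 < hitn E H Cc G B t n x"
proof (rule ccontr)
  assume p: "0 < hitprob E H Cc G B t x" and "\<not> (\<exists>n. 0 < hitn E H Cc G B t n x)"
  then have "\<forall>n. hitn E H Cc G B t n x \<le> 0" by (simp add: not_less)
  then have "hitprob E H Cc G B t x \<le> 0" unfolding hitprob_def by (intro cSUP_least) auto
  then show False using p by simp
qed

end


context chainctx
begin

lemma R_step:
  assumes "x \<noteq> X" "x \<notin> B" "y \<in> cs" "0 < cr x y" "\<exists>k. 0 < hitn E H Cc G B X k y"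
  shows "\<exists>k. 0 < hitn E H Cc G B X k x"
  using assms hitn_step by blast

lemma depth_val: "bd E C \<noteq> {} \<Longrightarrow> depth E H C = ereal (Min (H ` bd E C) - Min (H ` C))"
  unfolding depth_def by simp

lemma Min_H_le: "z \<in> S \<Longrightarrow> Min (H ` S) \<le> H z"
  by (intro Min_le) auto

lemma Min_H_ge: "\<forall>z. m \<le> H z \<Longrightarrow> S \<noteq> {} \<Longrightarrow> m \<le> Min (H ` S)"
  by (subst Min_ge_iff) auto

lemma Min_H_in: "S \<noteq> {} \<Longrightarrow> \<exists>z\<in>S. H z = Min (H ` S)"
proof -
  assume "S \<noteq> {}"
  then have "Min (H ` S) \<in> H ` S" by (intro Min_in) auto
  then show ?thesis by force
qed

lemma claim:
  assumes CY: "CY \<in> Cstar E H Cc G" "Y = Fmin H CY"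
    and T: "T = m + G" and mmin: "\<forall>z. m \<le> H z"
    and XA: "X \<in> A"
  shows "\<forall>\<eta>. \<eta> \<in> D \<longrightarrow> H \<eta> \<le> T \<longrightarrow> 0 < hitn E H Cc G A Y n {\<eta>} \<longrightarrow>
          H \<eta> = T \<and> (\<exists>z\<in>CY. H z \<le> m) \<and>
          ((\<exists>k. 0 < hitn E H Cc G A X k {\<eta>}) \<longrightarrow>
             (\<exists>\<eta>'\<in>D. 0 < cr Y {\<eta>'} \<and> (\<exists>k. 0 < hitn E H Cc G A X k {\<eta>'})))"
proof (induction n rule: less_induct)
  case (less n)
  have CYcc: "CY \<in> Cc" using CY(1) unfolding Cstar_def by simp
  have depCY: "ereal G \<le> depth E H CY" using CY(1) unfolding Cstar_def by simp
  have YA: "Y \<in> A" using CY unfolding Pstar_def by simp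
  show ?case
  proof (intro allI impI)
    fix \<eta> assume \<eta>: "\<eta> \<in> D" and hT: "H \<eta> \<le> T" and pos: "0 < hitn E H Cc G A Y n {\<eta>}"
    have nY: "{\<eta>} \<noteq> Y" using sing_not_F[OF \<eta> CYcc] CY(2) by simp
    have nA: "{\<eta>} \<notin> A" using sing_notA[OF \<eta>] .
    have nX: "{\<eta>} \<noteq> X" using nA XA by blast
    obtain k where nk: "n = Suc k"
      using pos nY by (cases n) auto
    obtain y where y: "y \<in> cs" "0 < cr {\<eta>} y" "0 < hitn E H Cc G A Y k y"
      using hitn_Suc_pos[OF nY nA] pos nk by blast
    from y(1) show "H \<eta> = T \<and> (\<exists>z\<in>CY. H z \<le> m) \<and>
          ((\<exists>k. 0 < hitn E H Cc G A X k {\<eta>}) \<longrightarrow>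
             (\<exists>\<eta>'\<in>D. 0 < cr Y {\<eta>'} \<and> (\<exists>k. 0 < hitn E H Cc G A X k {\<eta>'})))"
    proof (cases rule: cs_cases)
      case (1 \<xi>)
      have r: "\<eta> \<noteq> \<xi> \<and> E \<eta> \<xi> \<and> H \<xi> \<le> H \<eta>"
        using y(2) crate_dd[OF \<eta> 1(1)] 1(2) by (auto split: if_splits)
      have IH: "H \<xi> = T \<and> (\<exists>z\<in>CY. H z \<le> m) \<and>
          ((\<exists>k. 0 < hitn E H Cc G A X k {\<xi>}) \<longrightarrow>
             (\<exists>\<eta>'\<in>D. 0 < cr Y {\<eta>'} \<and> (\<exists>k. 0 < hitn E H Cc G A X k {\<eta>'})))"
        using less.IH[of k] nk 1 y(3) r hT by auto
      have hE: "H \<eta> = T" using IH r hT by linarith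
      have rev: "0 < cr {\<xi>} {\<eta>}" using crate_dd[OF 1(1) \<eta>] r hE IH sym by auto
      have "(\<exists>k. 0 < hitn E H Cc G A X k {\<eta>}) \<Longrightarrow> (\<exists>k. 0 < hitn E H Cc G A X k {\<xi>})"
        using R_step[of "{\<xi>}" X A "{\<eta>}"] rev cs_sing[OF \<eta>] sing_notA[OF 1(1)] XA by blast
      then show ?thesis using IH hE by blast
    next
      case (2 C)
      have bdC: "\<eta> \<in> bd E C" using y(2) 2 crate_dc_pos[OF \<eta> 2(1)] by simp
      show ?thesis
      proof (cases "y = Y")
        case True
        then have CC: "C = CY" using Fmin_inj[OF 2(1) CYcc] 2(2) CY(2) by simp
        have bne: "bd E CY \<noteq> {}" using bdC CC by blast
        have CYne: "CY \<noteq> {}" using Cc_ne CYcc by blast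
        have dv: "G \<le> Min (H ` bd E CY) - Min (H ` CY)" using depCY depth_val[OF bne] by simp
        have m1: "Min (H ` bd E CY) \<le> H \<eta>" using Min_H_le bdC CC by blast
        have m2: "m \<le> Min (H ` CY)" using Min_H_ge[OF mmin CYne] .
        have hE: "H \<eta> = T" using dv m1 m2 hT T by linarith
        obtain z where z: "z \<in> CY" "H z = Min (H ` CY)" using Min_H_in[OF CYne] by blast
        have zm: "H z \<le> m" using z dv m1 hE T by linarith
        have bs: "\<eta> \<in> bdstar E H CY"
          unfolding bdstar_def Fmin_def
        proof (intro CollectI conjI ballI)
          show "\<eta> \<in> bd E CY" using bdC CC by simp
          fix w assume "w \<in> bd E CY"
          then have "Min (H ` bd E CY) \<le> H w" by (rule Min_H_le)
          then show "H \<eta> \<le> H w" using dv m2 hE T by linarith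
        qed
        have "depth E H CY \<le> ereal G" using depth_val[OF bne] m1 m2 hE T by simp
        then have "0 < cr Y {\<eta>}" using crate_cd_pos[OF \<eta> CYcc] bs CY(2) by simp
        then show ?thesis using hE z zm \<eta> by blast
      next
        case False
        have yA: "y \<notin> A"
        proof
          assume "y \<in> A"
          then have "hitn E H Cc G A Y k y = 0" using hitn_B False by blast
          then show False using y(3) by simp
        qed
        obtain j where kj: "k = Suc j" using y(3) False by (cases k) auto
        obtain z where z: "z \<in> cs" "0 < cr y z" "0 < hitn E H Cc G A Y j z"
          using hitn_Suc_pos[OF False yA] y(3) kj by blast
        from z(1) show ?thesis
        proof (cases rule: cs_cases)
          case (2 C')
          then show ?thesis using crate_cc[OF \<open>C \<in> Cc\<close> 2(1)] z(2) \<open>y = Fmin H C\<close> by simp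
        next
          case (1 \<zeta>)
          have cz: "depth E H C \<le> ereal G \<and> \<zeta> \<in> bdstar E H C"
            using crate_cd_pos[OF 1(1) \<open>C \<in> Cc\<close>] z(2) 1(2) \<open>y = Fmin H C\<close> by simp
          have zb: "\<zeta> \<in> bd E C" "\<forall>w\<in>bd E C. H \<zeta> \<le> H w"
            using cz unfolding bdstar_def Fmin_def by auto
          have hz: "H \<zeta> \<le> H \<eta>" using zb bdC by blast
          have IH: "H \<zeta> = T \<and> (\<exists>z\<in>CY. H z \<le> m) \<and>
            ((\<exists>k. 0 < hitn E H Cc G A X k {\<zeta>}) \<longrightarrow>
               (\<exists>\<eta>'\<in>D. 0 < cr Y {\<eta>'} \<and> (\<exists>k. 0 < hitn E H Cc G A X k {\<eta>'})))"
            using less.IH[of j] nk kj 1 z(3) hz hT by auto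
          have hE: "H \<eta> = T" using IH hz hT by linarith
          have bs: "\<eta> \<in> bdstar E H C"
            unfolding bdstar_def Fmin_def using bdC zb hE IH by auto
          have c1: "0 < cr y {\<eta>}" using crate_cd_pos[OF \<eta> \<open>C \<in> Cc\<close>] cz bs \<open>y = Fmin H C\<close> by simp
          have c2: "0 < cr {\<zeta>} y" using crate_dc_pos[OF 1(1) \<open>C \<in> Cc\<close>] zb \<open>y = Fmin H C\<close> by simp
          have yX: "y \<noteq> X" using yA XA by blast
          have "(\<exists>k. 0 < hitn E H Cc G A X k {\<eta>}) \<Longrightarrow> (\<exists>k. 0 < hitn E H Cc G A X k y)"
            using R_step[of y X A "{\<eta>}"] c1 cs_sing[OF \<eta>] yA yX by blast
          moreover have "(\<exists>k. 0 < hitn E H Cc G A X k y) \<Longrightarrow> (\<exists>k. 0 < hitn E H Cc G A X k {\<zeta>})"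
            using R_step[of "{\<zeta>}" X A y] c2 y(1) sing_notA[OF 1(1)] XA by blast
          ultimately show ?thesis using IH hE by blast
        qed
      qed
    qed
  qed
qed

end


context chainctx
begin

lemma step:
  assumes tr: "(X, Y) \<in> treach E H Cc G" and gX: "\<exists>z\<in>X. z \<in> ground H"
  shows "(Y, X) \<in> treach E H Cc G \<and> (\<exists>z\<in>Y. z \<in> ground H)"
proof -
  have XA: "X \<in> A" and YA: "Y \<in> A" and XY: "X \<noteq> Y"
    and tp: "0 < trate E H Cc G X Y" using tr unfolding treach_def by auto
  obtain CX where CX: "CX \<in> Cstar E H Cc G" "X = Fmin H CX" using XA unfolding Pstar_def by auto
  obtain CY where CY: "CY \<in> Cstar E H Cc G" "Y = Fmin H CY" using YA unfolding Pstar_def by auto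
  have CXcc: "CX \<in> Cc" and depX: "ereal G \<le> depth E H CX" using CX unfolding Cstar_def by auto
  obtain g where g: "g \<in> X" "g \<in> ground H" using gX by blast
  define m where "m = H g"
  have mmin: "\<forall>z. m \<le> H z" using g unfolding m_def ground_def by auto
  obtain \<eta> where \<eta>: "\<eta> \<in> D" "0 < cr X {\<eta>} * hitprob E H Cc G A Y {\<eta>}"
  proof -
    have "\<not> (\<forall>\<eta>\<in>D. cr X {\<eta>} * hitprob E H Cc G A Y {\<eta>} \<le> 0)"
    proof
      assume "\<forall>\<eta>\<in>D. cr X {\<eta>} * hitprob E H Cc G A Y {\<eta>} \<le> 0"
      then have "trate E H Cc G X Y \<le> 0" unfolding trate_def by (intro sum_nonpos) auto
      then show False using tp by simp
    qed
    then show ?thesis using that by force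
  qed
  have c0: "0 \<le> cr X {\<eta>}" by (rule crate_nonneg)
  have h0: "0 \<le> hitprob E H Cc G A Y {\<eta>}" by (rule hitprob_nonneg)
  have cp: "0 < cr X {\<eta>}" and hp: "0 < hitprob E H Cc G A Y {\<eta>}"
    using \<eta>(2) c0 h0 by (auto simp: zero_less_mult_iff)
  have cx: "depth E H CX \<le> ereal G \<and> \<eta> \<in> bdstar E H CX"
    using crate_cd_pos[OF \<eta>(1) CXcc] cp CX(2) by simp
  have eb: "\<eta> \<in> bd E CX" "\<forall>w\<in>bd E CX. H \<eta> \<le> H w"
    using cx unfolding bdstar_def Fmin_def by auto
  have bne: "bd E CX \<noteq> {}" using eb by blast
  have dv: "Min (H ` bd E CX) - Min (H ` CX) = G"
    using cx depX depth_val[OF bne] by simp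
  have gC: "g \<in> CX" using g CX(2) Fmin_sub[of H CX] by blast
  have mC: "Min (H ` CX) = m"
  proof -
    have a: "Min (H ` CX) \<le> H g" by (rule Min_H_le[OF gC])
    have "CX \<noteq> {}" using gC by blast
    then have b: "m \<le> Min (H ` CX)" by (rule Min_H_ge[OF mmin])
    show ?thesis using a b unfolding m_def by linarith
  qed
  have hb: "H \<eta> = Min (H ` bd E CX)"
  proof -
    have a: "Min (H ` bd E CX) \<le> H \<eta>" by (rule Min_H_le[OF eb(1)])
    obtain w where w: "w \<in> bd E CX" "H w = Min (H ` bd E CX)" using Min_H_in[OF bne] by blast
    have "H \<eta> \<le> H w" using eb(2) w(1) by blast
    then show ?thesis using a w(2) by linarith
  qed
  have hT: "H \<eta> = m + G" using hb dv mC by simp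
  obtain n where n: "0 < hitn E H Cc G A Y n {\<eta>}" using hitprob_pos[OF hp] by blast
  have R0: "\<exists>k. 0 < hitn E H Cc G A X k {\<eta>}"
  proof (rule R_step[of "{\<eta>}" X A X])
    show "{\<eta>} \<noteq> X" using sing_notA[OF \<eta>(1)] XA by blast
    show "{\<eta>} \<notin> A" using sing_notA[OF \<eta>(1)] .
    show "X \<in> cs" using cs_F[OF CXcc] CX(2) by simp
    show "0 < cr {\<eta>} X" using crate_dc_pos[OF \<eta>(1) CXcc] eb CX(2) by simp
    have "hitn E H Cc G A X 0 X = 1" by (rule hitn_t)
    then show "\<exists>k. 0 < hitn E H Cc G A X k X" by (intro exI[of _ 0]) simp
  qed
  have cl: "H \<eta> = m + G \<and> (\<exists>z\<in>CY. H z \<le> m) \<and>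
          ((\<exists>k. 0 < hitn E H Cc G A X k {\<eta>}) \<longrightarrow>
             (\<exists>\<eta>'\<in>D. 0 < cr Y {\<eta>'} \<and> (\<exists>k. 0 < hitn E H Cc G A X k {\<eta>'})))"
    using claim[OF CY refl mmin XA, of n] \<eta>(1) hT n by auto
  obtain z where z: "z \<in> CY" "H z \<le> m" using cl by blast
  have zg: "z \<in> ground H" using z mmin unfolding ground_def by (auto intro: order_trans)
  have zY: "z \<in> Y" using ground_Fmin[OF zg z(1)] CY(2) by simp
  obtain \<eta>' k where \<eta>': "\<eta>' \<in> D" "0 < cr Y {\<eta>'}" "0 < hitn E H Cc G A X k {\<eta>'}"
    using cl R0 by blast
  have "0 < hitprob E H Cc G A X {\<eta>'}" using hitprob_ge[of A X k "{\<eta>'}"] \<eta>'(3) by linarith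
  then have "0 < cr Y {\<eta>'} * hitprob E H Cc G A X {\<eta>'}" using \<eta>'(2) by simp
  also have "\<dots> \<le> trate E H Cc G Y X"
    unfolding trate_def using \<eta>'(1)
    by (intro member_le_sum) (auto intro!: mult_nonneg_nonneg crate_nonneg hitprob_nonneg)
  finally have "0 < trate E H Cc G Y X" .
  then have "(Y, X) \<in> treach E H Cc G" using XA YA XY unfolding treach_def by auto
  then show ?thesis using zY zg by blast
qed

lemma main_chain:
  assumes C0: "C0 \<in> Cstar E H Cc G" and s: "s \<in> C0" "s \<in> ground H"
  shows "Fmin H C0 \<in> Prec E H Cc G"
proof -
  define X0 where "X0 = Fmin H C0"
  have X0A: "X0 \<in> A" unfolding X0_def Pstar_def using C0 by simp
  have sX: "s \<in> X0" unfolding X0_def using ground_Fmin[OF s(2) s(1)] .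
  have "(X0, P') \<in> (treach E H Cc G)\<^sup>* \<Longrightarrow>
        (\<exists>z\<in>P'. z \<in> ground H) \<and> (P', X0) \<in> (treach E H Cc G)\<^sup>*" for P'
  proof (induction rule: rtrancl_induct)
    case base then show ?case using sX s(2) by blast
  next
    case (step Y Z)
    then have "(Z, Y) \<in> treach E H Cc G \<and> (\<exists>z\<in>Z. z \<in> ground H)" using step.prems
      by (intro chainctx.step) (auto intro: chainctx_axioms)
    then show ?case using step.IH by (meson converse_rtrancl_into_rtrancl)
  qed
  then show ?thesis unfolding Prec_def X0_def[symmetric] using X0A by blast
qed

end


section \<open>Hierarchy invariants\<close>

lemma minH_le: "z \<in> S \<Longrightarrow> Min ((H::'a::finite \<Rightarrow> real) ` S) \<le> H z"
  by (intro Min_le) auto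

lemma minH_in: "S \<noteq> {} \<Longrightarrow> \<exists>z\<in>S. (H::'a::finite \<Rightarrow> real) z = Min (H ` S)"
proof -
  assume "S \<noteq> {}"
  then have "Min (H ` S) \<in> H ` S" by (intro Min_in) auto
  then show ?thesis by force
qed

lemma minH_ge: "(\<And>z. z \<in> S \<Longrightarrow> c \<le> H z) \<Longrightarrow> S \<noteq> {} \<Longrightarrow> c \<le> Min ((H::'a::finite \<Rightarrow> real) ` S)"
  using minH_in by metis

context gr
begin

lemma others_ne:
  assumes "2 \<le> card Ps" "P \<in> Ps" "\<forall>Q\<in>Ps. Q \<noteq> {}"
  shows "\<Union> (Ps - {P}) \<noteq> {}"
proof -
  have "card (Ps - {P}) \<ge> 1" using assms(1,2) by (simp add: card_Diff_singleton)
  then obtain Q where "Q \<in> Ps - {P}" by (metis card.empty ex_in_conv not_one_le_zero)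
  then show ?thesis using assms(3) by blast
qed

lemma Hm_le: "x \<in> P \<Longrightarrow> Hm H P \<le> H x" unfolding Hm_def by (rule minH_le)

lemma PhiS_single_le: "x \<in> P \<Longrightarrow> PhiS E H P {x} \<le> H x"
  using PhiS_le[of x P x "{x}"] Phi_refl[of x] by simp

lemma V_mem:
  assumes "x \<in> P" "H x \<le> Hm H P" "0 < Gam E H Ps P"
  shows "x \<in> Vset E H Ps P"
  using PhiS_single_le[OF assms(1)] assms unfolding Vset_def by simp

lemma V_ne:
  assumes "P \<noteq> {}" "0 < Gam E H Ps P"
  shows "Vset E H Ps P \<noteq> {}"
proof -
  obtain p where "p \<in> P" "H p = Hm H P" using minH_in[OF assms(1)] unfolding Hm_def by blast
  then show ?thesis using V_mem[of p P Ps] assms by auto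
qed

lemma V_disj:
  assumes PQ: "P \<in> Ps" "Q \<in> Ps" "P \<noteq> Q" "P \<noteq> {}" "Q \<noteq> {}"
    and x: "x \<in> Vset E H Ps P" "x \<in> Vset E H Ps Q"
  shows False
proof -
  define OP where "OP = \<Union> (Ps - {P})"
  define OQ where "OQ = \<Union> (Ps - {Q})"
  have QO: "Q \<subseteq> OP" "P \<subseteq> OQ" using PQ unfolding OP_def OQ_def by auto
  have xP: "PhiS E H P {x} < PhiS E H P OP" using x(1) unfolding Vset_def Gam_def OP_def by simp
  have xQ: "PhiS E H Q {x} < PhiS E H Q OQ" using x(2) unfolding Vset_def Gam_def OQ_def by simp
  obtain p where p: "p \<in> P" "PhiS E H P {x} = Phi E H p x"
    using PhiS_attain[OF PQ(4), of "{x}"] by auto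
  obtain q where q: "q \<in> Q" "PhiS E H Q {x} = Phi E H q x"
    using PhiS_attain[OF PQ(5), of "{x}"] by auto
  have "PhiS E H P OP \<le> Phi E H p q" using PhiS_le p(1) q(1) QO by blast
  moreover have "PhiS E H Q OQ \<le> Phi E H q p" using PhiS_le p(1) q(1) QO by blast
  moreover have "Phi E H p q \<le> max (Phi E H p x) (Phi E H x q)" by (rule Phi_trans)
  moreover have "Phi E H x q = Phi E H q x" "Phi E H q p = Phi E H p q" using Phi_sym by auto
  ultimately show False using xP xQ p q by linarith
qed

lemma V_depth:
  assumes "P \<noteq> {}" "0 < Gam E H Ps P"
  shows "ereal (Gam E H Ps P) \<le> depth E H (Vset E H Ps P)"
proof (cases "bd E (Vset E H Ps P) = {}")
  case True then show ?thesis unfolding depth_def by simp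
next
  case False
  define V where "V = Vset E H Ps P"
  define g where "g = Gam E H Ps P"
  have bb: "Hm H P + g \<le> H b" if b: "b \<in> bd E V" for b
  proof -
    obtain y where y: "y \<in> V" "E b y" "b \<notin> V" using b unfolding bd_def by auto
    have bV: "g \<le> PhiS E H P {b} - Hm H P" using y(3) unfolding V_def Vset_def g_def by simp
    have yV: "PhiS E H P {y} - Hm H P < g" using y(1) unfolding V_def Vset_def g_def by simp
    obtain p where p: "p \<in> P" "PhiS E H P {y} = Phi E H p y"
      using PhiS_attain[OF assms(1), of "{y}"] by auto
    have "PhiS E H P {b} \<le> Phi E H p b" using PhiS_le p(1) by blast
    also have "\<dots> \<le> max (Phi E H p y) (Phi E H y b)" by (rule Phi_trans)
    also have "Phi E H y b \<le> max (H y) (H b)" using Phi_edge y(2) sym by blast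
    moreover have "H y \<le> Phi E H p y" by (rule Phi_ge_last)
    ultimately have "PhiS E H P {b} \<le> max (Phi E H p y) (H b)" by linarith
    then show ?thesis using bV yV p by linarith
  qed
  obtain b where b: "b \<in> bd E V" "H b = Min (H ` bd E V)" using minH_in False unfolding V_def by metis
  obtain p where p: "p \<in> P" "H p = Hm H P" using minH_in[OF assms(1)] unfolding Hm_def by blast
  have pV: "p \<in> V" using V_mem[of p P Ps] p assms unfolding V_def by simp
  have "Min (H ` V) \<le> H p" using minH_le[OF pV] .
  then have "g \<le> Min (H ` bd E V) - Min (H ` V)" using bb[OF b(1)] b(2) p(2) by linarith
  then show ?thesis using False unfolding depth_def V_def g_def by simp
qed

lemma Gstar_le: "P \<in> Ps \<Longrightarrow> Gstar E H Ps \<le> Gam E H Ps P"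
  unfolding Gstar_def by (intro Min_le) auto

lemma Gstar_pos: "Ps \<noteq> {} \<Longrightarrow> \<forall>P\<in>Ps. 0 < Gam E H Ps P \<Longrightarrow> 0 < Gstar E H Ps"
proof -
  assume "Ps \<noteq> {}" "\<forall>P\<in>Ps. 0 < Gam E H Ps P"
  moreover have "Gstar E H Ps \<in> Gam E H Ps ` Ps" unfolding Gstar_def using \<open>Ps \<noteq> {}\<close>
    by (intro Min_in) auto
  ultimately show ?thesis by auto
qed

end


definition good :: "('a::finite \<Rightarrow> 'a \<Rightarrow> bool) \<Rightarrow> ('a \<Rightarrow> real) \<Rightarrow> 'a \<Rightarrow> 'a set set \<Rightarrow> 'a set set \<Rightarrow> bool" where
  "good E H s Ps Cc \<longleftrightarrow> 2 \<le> card Ps \<and> (\<forall>P\<in>Ps. P \<noteq> {}) \<and> (\<forall>P\<in>Ps. \<forall>Q\<in>Ps. P \<noteq> Q \<longrightarrow> P \<inter> Q = {})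
     \<and> (\<forall>P\<in>Ps. 0 < Gam E H Ps P) \<and> Vset E H Ps ` Ps \<subseteq> Cc \<and> (\<forall>C\<in>Cc. C \<noteq> {})
     \<and> (\<forall>C\<in>Cc. \<forall>C'\<in>Cc. C \<noteq> C' \<longrightarrow> C \<inter> C' = {}) \<and> (\<exists>P\<in>Ps. s \<in> P)"

lemma goodD:
  assumes "good E H s Ps Cc"
  shows "2 \<le> card Ps" "\<forall>P\<in>Ps. P \<noteq> {}" "\<forall>P\<in>Ps. \<forall>Q\<in>Ps. P \<noteq> Q \<longrightarrow> P \<inter> Q = {}"
    "\<forall>P\<in>Ps. 0 < Gam E H Ps P" "Vset E H Ps ` Ps \<subseteq> Cc" "\<forall>C\<in>Cc. C \<noteq> {}"
    "\<forall>C\<in>Cc. \<forall>C'\<in>Cc. C \<noteq> C' \<longrightarrow> C \<inter> C' = {}" "\<exists>P\<in>Ps. s \<in> P"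
  using assms unfolding good_def by simp_all

context gr
begin

lemma chainctx_I:
  "\<forall>C\<in>Cc. C \<noteq> {} \<Longrightarrow> \<forall>C\<in>Cc. \<forall>C'\<in>Cc. C \<noteq> C' \<longrightarrow> C \<inter> C' = {} \<Longrightarrow> chainctx E Cc"
  unfolding chainctx_def chainctx_axioms_def using gr_axioms by auto

lemma good_main:
  assumes s: "s \<in> ground H" and g: "good E H s Ps Cc"
  shows "\<exists>P\<in>Prec E H Cc (Gstar E H Ps). s \<in> P"
proof -
  obtain P0 where P0: "P0 \<in> Ps" "s \<in> P0" using goodD(8)[OF g] by blast
  have ne: "P0 \<noteq> {}" using goodD(2)[OF g] P0 by blast
  have gp: "0 < Gam E H Ps P0" using goodD(4)[OF g] P0 by blast
  define C0 where "C0 = Vset E H Ps P0"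
  have C0c: "C0 \<in> Cc" using goodD(5)[OF g] P0 unfolding C0_def by blast
  have "H s \<le> Hm H P0" unfolding Hm_def using s unfolding ground_def by (intro minH_ge ne) auto
  then have sC: "s \<in> C0" unfolding C0_def using V_mem P0(2) gp by blast
  have "ereal (Gstar E H Ps) \<le> ereal (Gam E H Ps P0)" using Gstar_le[OF P0(1)] by simp
  also have "\<dots> \<le> depth E H C0" unfolding C0_def by (rule V_depth[OF ne gp])
  finally have C0s: "C0 \<in> Cstar E H Cc (Gstar E H Ps)" unfolding Cstar_def using C0c by simp
  have cc: "chainctx E Cc" using goodD(6,7)[OF g] by (rule chainctx_I)
  have "Fmin H C0 \<in> Prec E H Cc (Gstar E H Ps)"
    using chainctx.main_chain[OF cc C0s sC s] .
  moreover have "s \<in> Fmin H C0" using ground_Fmin[OF s sC] .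
  ultimately show ?thesis by blast
qed

end

context chainctx
begin

definition "cls P = {P'. (P, P') \<in> (treach E H Cc G)\<^sup>* \<and> (P', P) \<in> (treach E H Cc G)\<^sup>*}"

lemma CL_elem: "K \<in> closed_classes E H Cc G \<Longrightarrow> \<exists>P\<in>Prec E H Cc G. K = cls P"
  unfolding closed_classes_def cls_def by blast

lemma Prec_A: "P \<in> Prec E H Cc G \<Longrightarrow> P \<in> A" unfolding Prec_def by simp

lemma reach_A: "(P, P') \<in> (treach E H Cc G)\<^sup>* \<Longrightarrow> P \<in> A \<Longrightarrow> P' \<in> A"
  by (erule rtranclE) (auto simp: treach_def)

lemma cls_sub: "P \<in> A \<Longrightarrow> cls P \<subseteq> A" unfolding cls_def using reach_A by blast

lemma cls_self: "P \<in> cls P" unfolding cls_def by simp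

lemma cls_eq: "Q \<in> cls P1 \<Longrightarrow> Q \<in> cls P2 \<Longrightarrow> cls P1 = cls P2"
  unfolding cls_def by (auto intro: rtrancl_trans)

lemma A_cyc: "Q \<in> A \<Longrightarrow> \<exists>C\<in>Cstar E H Cc G. Q = Fmin H C" unfolding Pstar_def by auto

lemma Cstar_Cc: "C \<in> Cstar E H Cc G \<Longrightarrow> C \<in> Cc" unfolding Cstar_def by simp

lemma A_disj: "Q1 \<in> A \<Longrightarrow> Q2 \<in> A \<Longrightarrow> x \<in> Q1 \<Longrightarrow> x \<in> Q2 \<Longrightarrow> Q1 = Q2"
proof -
  assume a: "Q1 \<in> A" "Q2 \<in> A" "x \<in> Q1" "x \<in> Q2"
  obtain C1 where C1: "C1 \<in> Cc" "Q1 = Fmin H C1" using A_cyc[OF a(1)] Cstar_Cc by blast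
  obtain C2 where C2: "C2 \<in> Cc" "Q2 = Fmin H C2" using A_cyc[OF a(2)] Cstar_Cc by blast
  have "x \<in> C1" "x \<in> C2" using a(3) a(4) C1(2) C2(2) Fmin_sub[of H C1] Fmin_sub[of H C2] by auto
  then have "C1 = C2" using Cc_disj C1 C2 by blast
  then show ?thesis using C1 C2 by simp
qed

lemma A_ne: "Q \<in> A \<Longrightarrow> Q \<noteq> {}"
  using A_cyc Cstar_Cc Cc_ne Fmin_ne by metis

lemma CL_sub: "K \<in> closed_classes E H Cc G \<Longrightarrow> K \<subseteq> A"
  using CL_elem cls_sub Prec_A by blast

lemma CL_Union_ne: "K \<in> closed_classes E H Cc G \<Longrightarrow> \<Union>K \<noteq> {}"
  using CL_elem cls_self Prec_A A_ne by blast

lemma CL_disj: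
  assumes "K1 \<in> closed_classes E H Cc G" "K2 \<in> closed_classes E H Cc G" "x \<in> \<Union>K1" "x \<in> \<Union>K2"
  shows "K1 = K2"
proof -
  obtain Q1 Q2 where Q: "Q1 \<in> K1" "Q2 \<in> K2" "x \<in> Q1" "x \<in> Q2" using assms(3,4) by blast
  have "Q1 = Q2" using A_disj Q CL_sub assms(1,2) by blast
  moreover obtain P1 P2 where "K1 = cls P1" "K2 = cls P2" using CL_elem assms(1,2) by metis
  ultimately show ?thesis using cls_eq Q by blast
qed

lemma sep:
  assumes C: "C \<in> Cstar E H Cc G" and p: "p \<in> Fmin H C" and q: "q \<notin> C"
  shows "H p + G \<le> Phi E H p q"
proof -
  have pC: "p \<in> C" using p Fmin_sub[of H C] by auto
  obtain b where b: "b \<in> bd E C" "H b \<le> Phi E H p q" using Phi_cross[OF pC q] by blast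
  have bne: "bd E C \<noteq> {}" using b by blast
  have "ereal G \<le> depth E H C" using C unfolding Cstar_def by simp
  then have d: "G \<le> Min (H ` bd E C) - Min (H ` C)" using depth_val[OF bne] by simp
  have "Min (H ` bd E C) \<le> H b" using minH_le[OF b(1)] .
  moreover have "H p \<le> Min (H ` C)" using p unfolding Fmin_def by (intro minH_ge) auto
  ultimately show ?thesis using d b by linarith
qed

end


context gr
begin

lemma splD:
  assumes "stable_plateau E H P"
  shows "P \<noteq> {}" "conn_set E P" "\<forall>a\<in>P. \<forall>b\<in>P. H a = H b" "\<forall>a\<in>P. \<forall>b\<in>bd E P. H a < H b"
  using assms unfolding stable_plateau_def by blast+

lemma plat_sub:
  assumes P: "stable_plateau E H P" and Q: "stable_plateau E H Q" and x: "x \<in> P" "x \<in> Q"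
  shows "Q \<subseteq> P"
proof
  fix y assume yQ: "y \<in> Q"
  show "y \<in> P"
  proof (rule ccontr)
    assume yP: "y \<notin> P"
    have cQ: "conn_set E Q" and hQ: "\<forall>a\<in>Q. \<forall>b\<in>Q. H a = H b" using splD[OF Q] by blast+
    have bP: "\<forall>a\<in>P. \<forall>b\<in>bd E P. H a < H b" using splD[OF P] by blast
    obtain w where w: "is_path E w" "hd w = x" "last w = y" "set w \<subseteq> Q"
      using cQ x(2) yQ unfolding conn_set_def by blast
    obtain i where i: "Suc i < length w" "w ! i \<in> P" "w ! Suc i \<notin> P"
      using path_cross[of E w "\<lambda>u. u \<in> P"] w x(1) yP by auto
    have e: "E (w ! i) (w ! Suc i)" using w(1) i(1) unfolding is_path_def by blast
    then have "w ! Suc i \<in> bd E P" using i sym unfolding bd_def by blast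
    then have lt: "H (w ! i) < H (w ! Suc i)" using bP i(2) by blast
    have "w ! i \<in> Q" "w ! Suc i \<in> Q" using w(4) i(1) nth_mem[of i w] nth_mem[of "Suc i" w] by auto
    then have "H (w ! i) = H (w ! Suc i)" using hQ by blast
    then show False using lt by simp
  qed
qed

lemma plat_Gam:
  assumes st: "\<forall>P\<in>Ps. stable_plateau E H P" and dj: "\<forall>P\<in>Ps. \<forall>Q\<in>Ps. P \<noteq> Q \<longrightarrow> P \<inter> Q = {}"
    and c2: "2 \<le> card Ps" and P: "P \<in> Ps"
  shows "0 < Gam E H Ps P"
proof -
  have ne: "\<forall>Q\<in>Ps. Q \<noteq> {}" using st splD(1) by blast
  have Pne: "P \<noteq> {}" using ne P by blast
  obtain p q where pq: "p \<in> P" "q \<in> \<Union> (Ps - {P})" "PhiS E H P (\<Union> (Ps - {P})) = Phi E H p q"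
    using PhiS_attain[OF Pne others_ne[OF c2 P ne]] by blast
  obtain Q where Q: "Q \<in> Ps" "Q \<noteq> P" "q \<in> Q" using pq(2) by blast
  have qP: "q \<notin> P" using dj Q P by blast
  obtain b where b: "b \<in> bd E P" "H b \<le> Phi E H p q" using Phi_cross[OF pq(1) qP] by blast
  have "H p < H b" using splD(4)[of P] st P b(1) pq(1) by blast
  moreover have "Hm H P \<le> H p" using Hm_le[OF pq(1)] .
  ultimately show ?thesis unfolding Gam_def using pq(3) b(2) by linarith
qed

lemma Vfam:
  assumes ne: "\<forall>P\<in>Ps. P \<noteq> {}" and C: "C \<in> Vset E H Ps ` Ps" "C' \<in> Vset E H Ps ` Ps" "C \<noteq> C'"
  shows "C \<inter> C' = {}"
proof (rule ccontr)
  assume "C \<inter> C' \<noteq> {}"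
  then obtain x where x: "x \<in> C" "x \<in> C'" by blast
  obtain P Q where PQ: "P \<in> Ps" "Q \<in> Ps" "C = Vset E H Ps P" "C' = Vset E H Ps Q" using C by blast
  have "P \<noteq> Q" using PQ C(3) by blast
  then show False using V_disj[OF PQ(1,2) _ _ _, of x] ne PQ x by blast
qed

definition "Rm s = {(a, b). E a b \<and> H a = H s \<and> H b = H s}"

lemma rt_path:
  "(x, y) \<in> (Rm s)\<^sup>* \<Longrightarrow> \<exists>w. is_path E w \<and> hd w = x \<and> last w = y \<and> (\<forall>z\<in>set w. (x, z) \<in> (Rm s)\<^sup>*)"
proof (induction rule: rtrancl_induct)
  case base then show ?case by (intro exI[of _ "[x]"]) simp
next
  case (step y z)
  then obtain w where w: "is_path E w" "hd w = x" "last w = y" "\<forall>u\<in>set w. (x, u) \<in> (Rm s)\<^sup>*" by blast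
  have ne: "w \<noteq> []" using w unfolding is_path_def by auto
  have e: "E y z" using step(2) unfolding Rm_def by simp
  have "is_path E (w @ [z])" using is_path_snoc[of E w z] w e by simp
  moreover have "\<forall>u\<in>set (w @ [z]). (x, u) \<in> (Rm s)\<^sup>*" using w(4) step by auto
  ultimately show ?case using w ne by (intro exI[of _ "w @ [z]"]) auto
qed

lemma rt_H: "(s, x) \<in> (Rm s)\<^sup>* \<Longrightarrow> H x = H s"
  by (induction rule: rtrancl_induct) (auto simp: Rm_def)

lemma rt_sym: "(x, y) \<in> (Rm s)\<^sup>* \<Longrightarrow> (y, x) \<in> (Rm s)\<^sup>*"
proof -
  assume a: "(x, y) \<in> (Rm s)\<^sup>*"
  have "converse (Rm s) = Rm s" unfolding Rm_def using sym by auto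
  then show ?thesis using rtrancl_converseI[OF a] by simp
qed

lemma ground_plat:
  assumes s: "s \<in> ground H"
  shows "\<exists>P\<in>plateaux1 E H. s \<in> P"
proof -
  define P where "P = {x. (s, x) \<in> (Rm s)\<^sup>*}"
  have sP: "s \<in> P" unfolding P_def by simp
  have HP: "\<forall>x\<in>P. H x = H s" unfolding P_def using rt_H by blast
  have conn: "conn_set E P" unfolding conn_set_def
  proof (intro ballI)
    fix x y assume x: "x \<in> P" and y: "y \<in> P"
    have "(x, s) \<in> (Rm s)\<^sup>*" using x rt_sym unfolding P_def by blast
    moreover have "(s, y) \<in> (Rm s)\<^sup>*" using y unfolding P_def by simp
    ultimately have xy: "(x, y) \<in> (Rm s)\<^sup>*" using rtrancl_trans[of x s "Rm s" y] by simp
    obtain w where w: "is_path E w" "hd w = x" "last w = y" "\<forall>z\<in>set w. (x, z) \<in> (Rm s)\<^sup>*"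
      using rt_path[OF xy] by blast
    have "set w \<subseteq> P"
    proof
      fix z assume "z \<in> set w"
      then have "(x, z) \<in> (Rm s)\<^sup>*" using w(4) by blast
      moreover have "(s, x) \<in> (Rm s)\<^sup>*" using x unfolding P_def by simp
      ultimately show "z \<in> P" unfolding P_def using rtrancl_trans[of s x "Rm s" z] by simp
    qed
    then show "\<exists>w. is_path E w \<and> hd w = x \<and> last w = y \<and> set w \<subseteq> P" using w by blast
  qed
  have bd: "\<forall>x\<in>P. \<forall>y\<in>bd E P. H x < H y"
  proof (intro ballI)
    fix x y assume x: "x \<in> P" and y: "y \<in> bd E P"
    obtain x' where x': "x' \<in> P" "E y x'" "y \<notin> P" using y unfolding bd_def by blast
    have ge: "H s \<le> H y" using s unfolding ground_def by simp
    have "H y \<noteq> H s"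
    proof
      assume hy: "H y = H s"
      have "(x', y) \<in> Rm s" unfolding Rm_def using x' hy HP sym by auto
      moreover have "(s, x') \<in> (Rm s)\<^sup>*" using x'(1) unfolding P_def by simp
      ultimately have "(s, y) \<in> (Rm s)\<^sup>*" using rtrancl_into_rtrancl[of s x' "Rm s" y] by simp
      then show False using x'(3) unfolding P_def by simp
    qed
    moreover have "H x = H s" using HP x by blast
    ultimately show "H x < H y" using ge by linarith
  qed
  have st: "stable_plateau E H P" unfolding stable_plateau_def
  proof (intro conjI)
    show "P \<noteq> {}" using sP by blast
    show "\<forall>x\<in>P. \<forall>y\<in>P. H x = H y" by (intro ballI) (simp add: HP)
  qed (use conn bd in auto)
  have fin: "finite {Phi E H a b | a b. a \<in> ground H \<and> b \<in> ground H}" by (rule PhiS_fin)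
  have "Phi E H s s \<le> Phibar E H" unfolding Phibar_def using s by (intro Max_ge[OF fin]) auto
  then have phb: "H s \<le> Phibar E H" using Phi_refl by simp
  have "P \<subseteq> Omegabar E H"
  proof
    fix x assume x: "x \<in> P"
    obtain w where w: "is_path E w" "hd w = s" "last w = x" "\<forall>z\<in>set w. (s, z) \<in> (Rm s)\<^sup>*"
      using rt_path[of s x s] x unfolding P_def by blast
    have ne: "w \<noteq> []" using w unfolding is_path_def by simp
    have "path_height H w \<le> H s" using ne w(4) rt_H by (intro path_height_le) auto
    moreover have "Phi E H s x \<le> path_height H w" using Phi_le[OF w(1-3)] .
    moreover have "PhiS E H (ground H) {x} \<le> Phi E H s x" using PhiS_le[OF s, of x "{x}"] by simp
    ultimately show "x \<in> Omegabar E H" unfolding Omegabar_def using phb by simp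
  qed
  then show ?thesis unfolding plateaux1_def using st sP by blast
qed

lemma good1:
  assumes s: "s \<in> ground H" and c2: "2 \<le> card (plateaux1 E H)"
  shows "good E H s (plateaux1 E H) (Vset E H (plateaux1 E H) ` plateaux1 E H)"
proof -
  define Ps where "Ps = plateaux1 E H"
  have st: "\<forall>P\<in>Ps. stable_plateau E H P" unfolding Ps_def plateaux1_def by simp
  have ne: "\<forall>P\<in>Ps. P \<noteq> {}" using st splD(1) by blast
  have dj: "\<forall>P\<in>Ps. \<forall>Q\<in>Ps. P \<noteq> Q \<longrightarrow> P \<inter> Q = {}"
  proof (intro ballI impI)
    fix P Q assume PQ: "P \<in> Ps" "Q \<in> Ps" "P \<noteq> Q"
    show "P \<inter> Q = {}"
    proof (rule ccontr)
      assume "P \<inter> Q \<noteq> {}"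
      then obtain x where x: "x \<in> P" "x \<in> Q" by blast
      have stP: "stable_plateau E H P" using st PQ(1) by blast
      have stQ: "stable_plateau E H Q" using st PQ(2) by blast
      have "Q \<subseteq> P" using plat_sub[OF stP stQ x] .
      moreover have "P \<subseteq> Q" using plat_sub[OF stQ stP x(2) x(1)] .
      ultimately show False using PQ(3) by blast
    qed
  qed
  have c2': "2 \<le> card Ps" using c2 unfolding Ps_def .
  have gam: "\<forall>P\<in>Ps. 0 < Gam E H Ps P" by (intro ballI plat_Gam[OF st dj c2'])
  have vne: "\<forall>C\<in>Vset E H Ps ` Ps. C \<noteq> {}"
  proof
    fix C assume "C \<in> Vset E H Ps ` Ps"
    then obtain P where P: "P \<in> Ps" "C = Vset E H Ps P" by blast
    have "P \<noteq> {}" using ne P(1) by blast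
    moreover have "0 < Gam E H Ps P" using gam P(1) by blast
    ultimately show "C \<noteq> {}" using V_ne P(2) by blast
  qed
  have vdj: "\<forall>C\<in>Vset E H Ps ` Ps. \<forall>C'\<in>Vset E H Ps ` Ps. C \<noteq> C' \<longrightarrow> C \<inter> C' = {}"
    by (intro ballI impI) (rule Vfam[OF ne])
  have ex: "\<exists>P\<in>Ps. s \<in> P" using ground_plat[OF s] unfolding Ps_def .
  have sub: "Vset E H Ps ` Ps \<subseteq> Vset E H Ps ` Ps" by (rule subset_refl)
  show ?thesis unfolding good_def Ps_def[symmetric]
    using c2' ne dj gam sub vne vdj ex by (intro conjI)
qed

end


context gr
begin

lemma good_step:
  assumes s: "s \<in> ground H" and g: "good E H s Ps Cc"
    and c2: "2 \<le> card (closed_classes E H Cc (Gstar E H Ps))"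
  defines "G \<equiv> Gstar E H Ps"
  defines "CL \<equiv> closed_classes E H Cc G"
  defines "Ps' \<equiv> Union ` CL"
  defines "Cc' \<equiv> Vset E H Ps' ` Ps' \<union>
      {C \<in> Ctr E H Cc G \<union> Csharp E H Cc G. \<forall>P\<in>Ps'. C \<inter> Vset E H Ps' P = {}}"
  shows "good E H s Ps' Cc'"
proof -
  have cc: "chainctx E Cc" using goodD(6,7)[OF g] by (rule chainctx_I)
  have Psne: "Ps \<noteq> {}" using goodD(1)[OF g] by auto
  have Gpos: "0 < G" unfolding G_def using Gstar_pos[OF Psne goodD(4)[OF g]] .
  have CLne: "\<And>K. K \<in> CL \<Longrightarrow> \<Union>K \<noteq> {}" unfolding CL_def by (rule chainctx.CL_Union_ne[OF cc])
  have CLdj: "\<And>K1 K2 x. K1 \<in> CL \<Longrightarrow> K2 \<in> CL \<Longrightarrow> x \<in> \<Union>K1 \<Longrightarrow> x \<in> \<Union>K2 \<Longrightarrow> K1 = K2"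
    unfolding CL_def by (rule chainctx.CL_disj[OF cc])
  have inj: "inj_on Union CL"
  proof (rule inj_onI)
    fix K1 K2 assume K: "K1 \<in> CL" "K2 \<in> CL" "\<Union>K1 = \<Union>K2"
    obtain x where "x \<in> \<Union>K1" using CLne[OF K(1)] by blast
    then show "K1 = K2" using CLdj[OF K(1,2)] K(3) by simp
  qed
  have card': "2 \<le> card Ps'" unfolding Ps'_def using card_image[OF inj] c2
    unfolding CL_def G_def by simp
  have ne': "\<forall>P\<in>Ps'. P \<noteq> {}" unfolding Ps'_def using CLne by blast
  have dj': "\<forall>P\<in>Ps'. \<forall>Q\<in>Ps'. P \<noteq> Q \<longrightarrow> P \<inter> Q = {}"
  proof (intro ballI impI)
    fix P Q assume PQ: "P \<in> Ps'" "Q \<in> Ps'" "P \<noteq> Q"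
    obtain K1 where K1: "K1 \<in> CL" "P = \<Union>K1" using PQ(1) unfolding Ps'_def by blast
    obtain K2 where K2: "K2 \<in> CL" "Q = \<Union>K2" using PQ(2) unfolding Ps'_def by blast
    show "P \<inter> Q = {}"
    proof (rule ccontr)
      assume "P \<inter> Q \<noteq> {}"
      then obtain x where "x \<in> \<Union>K1" "x \<in> \<Union>K2" using K1 K2 by blast
      then have "K1 = K2" using CLdj[OF K1(1) K2(1)] by simp
      then show False using PQ(3) K1 K2 by simp
    qed
  qed
  have CLsub: "\<And>K. K \<in> CL \<Longrightarrow> K \<subseteq> Pstar E H Cc G" unfolding CL_def by (rule chainctx.CL_sub[OF cc])
  have Acyc: "\<And>Q. Q \<in> Pstar E H Cc G \<Longrightarrow> \<exists>C\<in>Cstar E H Cc G. Q = Fmin H C"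
    by (rule chainctx.A_cyc[OF cc])
  have CsCc: "\<And>C. C \<in> Cstar E H Cc G \<Longrightarrow> C \<in> Cc" unfolding Cstar_def by simp
  have gam': "\<forall>P\<in>Ps'. 0 < Gam E H Ps' P"
  proof
    fix P assume P: "P \<in> Ps'"
    obtain K where K: "K \<in> CL" "P = \<Union>K" using P unfolding Ps'_def by blast
    have Pne: "P \<noteq> {}" using ne' P by blast
    have One: "\<Union> (Ps' - {P}) \<noteq> {}" using others_ne[OF card' P ne'] .
    have "Hm H P + G \<le> PhiS E H P (\<Union> (Ps' - {P}))"
    proof (rule PhiS_ge[OF Pne One])
      fix p q assume p: "p \<in> P" and q: "q \<in> \<Union> (Ps' - {P})"
      obtain Q where Q: "Q \<in> K" "p \<in> Q" using p K(2) by blast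
      have QA: "Q \<in> Pstar E H Cc G" using CLsub[OF K(1)] Q(1) by blast
      obtain C where C: "C \<in> Cstar E H Cc G" "Q = Fmin H C" using Acyc[OF QA] by blast
      obtain P2 where P2: "P2 \<in> Ps'" "P2 \<noteq> P" "q \<in> P2" using q by blast
      obtain K2 where K2: "K2 \<in> CL" "P2 = \<Union>K2" using P2(1) unfolding Ps'_def by blast
      obtain Q2 where Q2: "Q2 \<in> K2" "q \<in> Q2" using P2(3) K2(2) by blast
      have Q2A: "Q2 \<in> Pstar E H Cc G" using CLsub[OF K2(1)] Q2(1) by blast
      obtain C2 where C2: "C2 \<in> Cstar E H Cc G" "Q2 = Fmin H C2" using Acyc[OF Q2A] by blast
      have qC: "q \<notin> C"
      proof
        assume qC: "q \<in> C"
        have "q \<in> C2" using Q2(2) C2(2) Fmin_sub[of H C2] by blast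
        then have "C = C2" using goodD(7)[OF g] CsCc[OF C(1)] CsCc[OF C2(1)] qC by blast
        then have "q \<in> \<Union>K" using Q(1) C(2) C2(2) Q2(2) by blast
        then have "K = K2" using CLdj[OF K(1) K2(1)] Q2 by blast
        then show False using P2(2) K K2 by simp
      qed
      have "H p + G \<le> Phi E H p q"
        using chainctx.sep[OF cc C(1) _ qC] Q(2) C(2) by blast
      moreover have "Hm H P \<le> H p" using Hm_le[OF p] .
      ultimately show "Hm H P + G \<le> Phi E H p q" by linarith
    qed
    then show "0 < Gam E H Ps' P" unfolding Gam_def using Gpos by linarith
  qed
  have Vsub: "Vset E H Ps' ` Ps' \<subseteq> Cc'" unfolding Cc'_def by blast
  have oldCc: "\<And>C. C \<in> Ctr E H Cc G \<union> Csharp E H Cc G \<Longrightarrow> C \<in> Cc"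
    unfolding Ctr_def Csharp_def Cstar_def by blast
  have Ccne: "\<forall>C\<in>Cc'. C \<noteq> {}"
  proof
    fix C assume C: "C \<in> Cc'"
    show "C \<noteq> {}"
    proof (cases "C \<in> Vset E H Ps' ` Ps'")
      case True
      then obtain P where P: "P \<in> Ps'" "C = Vset E H Ps' P" by blast
      have "P \<noteq> {}" using ne' P(1) by blast
      moreover have "0 < Gam E H Ps' P" using gam' P(1) by blast
      ultimately show ?thesis using V_ne P(2) by blast
    next
      case False
      then have "C \<in> Cc" using C oldCc unfolding Cc'_def by blast
      then show ?thesis using goodD(6)[OF g] by blast
    qed
  qed
  have Ccdj: "\<forall>C\<in>Cc'. \<forall>C'\<in>Cc'. C \<noteq> C' \<longrightarrow> C \<inter> C' = {}"
  proof (intro ballI impI)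
    fix C C' assume C: "C \<in> Cc'" "C' \<in> Cc'" "C \<noteq> C'"
    show "C \<inter> C' = {}"
    proof (cases "C \<in> Vset E H Ps' ` Ps'")
      case CV: True
      show ?thesis
      proof (cases "C' \<in> Vset E H Ps' ` Ps'")
        case True show ?thesis by (rule Vfam[OF ne' CV True C(3)])
      next
        case False
        then have "\<forall>P\<in>Ps'. C' \<inter> Vset E H Ps' P = {}" using C(2) unfolding Cc'_def by blast
        then show ?thesis using CV by blast
      qed
    next
      case CN: False
      then have h1: "C \<in> Cc" "\<forall>P\<in>Ps'. C \<inter> Vset E H Ps' P = {}" using C(1) oldCc unfolding Cc'_def by blast+
      show ?thesis
      proof (cases "C' \<in> Vset E H Ps' ` Ps'")
        case True then show ?thesis using h1(2) by blast
      next
        case False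
        then have "C' \<in> Cc" using C(2) oldCc unfolding Cc'_def by blast
        then show ?thesis using goodD(7)[OF g] h1(1) C(3) by blast
      qed
    qed
  qed
  obtain X where X: "X \<in> Prec E H Cc G" "s \<in> X" using good_main[OF s g] unfolding G_def by blast
  define K where "K = {P'. (X, P') \<in> (treach E H Cc G)\<^sup>* \<and> (P', X) \<in> (treach E H Cc G)\<^sup>*}"
  have KCL: "K \<in> CL" unfolding CL_def closed_classes_def K_def using X(1) by blast
  have "X \<in> K" unfolding K_def by simp
  then have sP: "\<exists>P\<in>Ps'. s \<in> P" unfolding Ps'_def using KCL X(2) by blast
  show ?thesis unfolding good_def using card' ne' dj' gam' Vsub Ccne Ccdj sP by (intro conjI)
qed

lemma levP1: "levP E H (Suc 0) = plateaux1 E H" unfolding levP_def by simp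
lemma levC1: "levC E H (Suc 0) = Vset E H (plateaux1 E H) ` plateaux1 E H" unfolding levC_def by simp

lemma levSS:
  "levP E H (Suc (Suc n)) = Union ` closed_classes E H (levC E H (Suc n)) (Gstar E H (levP E H (Suc n)))"
  "levC E H (Suc (Suc n)) =
     Vset E H (Union ` closed_classes E H (levC E H (Suc n)) (Gstar E H (levP E H (Suc n))))
        ` (Union ` closed_classes E H (levC E H (Suc n)) (Gstar E H (levP E H (Suc n)))) \<union>
     {C \<in> Ctr E H (levC E H (Suc n)) (Gstar E H (levP E H (Suc n))) \<union>
          Csharp E H (levC E H (Suc n)) (Gstar E H (levP E H (Suc n))).
        \<forall>P\<in>Union ` closed_classes E H (levC E H (Suc n)) (Gstar E H (levP E H (Suc n))).
          C \<inter> Vset E H (Union ` closed_classes E H (levC E H (Suc n)) (Gstar E H (levP E H (Suc n)))) P = {}}"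
proof -
  obtain Ps Cc where eq: "lev E H (Suc n) = (Ps, Cc)" by (cases "lev E H (Suc n)")
  have P: "levP E H (Suc n) = Ps" "levC E H (Suc n) = Cc" unfolding levP_def levC_def using eq by simp_all
  show "levP E H (Suc (Suc n)) = Union ` closed_classes E H (levC E H (Suc n)) (Gstar E H (levP E H (Suc n)))"
    unfolding P unfolding levP_def using eq by (simp add: Let_def)
  show "levC E H (Suc (Suc n)) =
     Vset E H (Union ` closed_classes E H (levC E H (Suc n)) (Gstar E H (levP E H (Suc n))))
        ` (Union ` closed_classes E H (levC E H (Suc n)) (Gstar E H (levP E H (Suc n)))) \<union>
     {C \<in> Ctr E H (levC E H (Suc n)) (Gstar E H (levP E H (Suc n))) \<union>
          Csharp E H (levC E H (Suc n)) (Gstar E H (levP E H (Suc n))).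
        \<forall>P\<in>Union ` closed_classes E H (levC E H (Suc n)) (Gstar E H (levP E H (Suc n))).
          C \<inter> Vset E H (Union ` closed_classes E H (levC E H (Suc n)) (Gstar E H (levP E H (Suc n)))) P = {}}"
    unfolding P unfolding levC_def using eq by (simp add: Let_def)
qed

lemma good_lev:
  assumes s: "s \<in> ground H" and nu0: "2 \<le> card (plateaux1 E H)"
  shows "1 \<le> h \<Longrightarrow> \<forall>k\<in>{1..<h}. 2 \<le> nu E H k \<Longrightarrow> good E H s (levP E H h) (levC E H h)"
proof (induction h)
  case 0 then show ?case by simp
next
  case (Suc h)
  show ?case
  proof (cases h)
    case 0
    then show ?thesis using good1[OF s nu0] levP1 levC1 by simp
  next
    case (Suc n)
    have gh: "good E H s (levP E H h) (levC E H h)" using Suc.IH Suc.prems \<open>h = Suc n\<close> by simp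
    have "2 \<le> nu E H h" using Suc.prems \<open>h = Suc n\<close> by simp
    then have c2: "2 \<le> card (closed_classes E H (levC E H h) (Gstar E H (levP E H h)))"
      unfolding nu_def .
    have "good E H s (Union ` closed_classes E H (levC E H h) (Gstar E H (levP E H h)))
      (Vset E H (Union ` closed_classes E H (levC E H h) (Gstar E H (levP E H h))) `
         (Union ` closed_classes E H (levC E H h) (Gstar E H (levP E H h))) \<union>
       {C \<in> Ctr E H (levC E H h) (Gstar E H (levP E H h)) \<union> Csharp E H (levC E H h) (Gstar E H (levP E H h)).
         \<forall>P\<in>Union ` closed_classes E H (levC E H h) (Gstar E H (levP E H h)).
           C \<inter> Vset E H (Union ` closed_classes E H (levC E H h) (Gstar E H (levP E H h))) P = {}})"
      using good_step[OF s gh c2] .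
    then show ?thesis using levSS[of n] \<open>h = Suc n\<close> by simp
  qed
qed

end

theorem mainTheorem7:
  fixes E :: "'a::finite \<Rightarrow> 'a \<Rightarrow> bool" and H :: "'a \<Rightarrow> real" and s :: 'a and h :: nat
  assumes sym: "\<forall>x y. E x y \<longrightarrow> E y x"
    and connected: "\<forall>x y. (x, y) \<in> {(a, b). E a b}\<^sup>*"
    and nu0: "card (plateaux1 E H) \<ge> 2"
    and s: "s \<in> ground H"
    and h1: "1 \<le> h"
    and levels: "\<forall>k\<in>{1..<h}. nu E H k \<ge> 2"
  shows "\<exists>P\<in>Prec_lev E H h. s \<in> P"
proof -
  have gr: "gr E" unfolding gr_def using sym connected by blast
  have "good E H s (levP E H h) (levC E H h)"
    using gr.good_lev[OF gr s nu0 h1 levels] .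
  then show ?thesis unfolding Prec_lev_def using gr.good_main[OF gr s] by blast
qed

end
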